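(* There is a polynomial $p$ such that for every $n>0$ there are finite alphabets $\Sigma_I,\Sigma_O$ and a language $L_n\subseteq(\Sigma_I\times\Sigma_O)^\omega$ recognized by a Streett automaton with costs $\mathcal{A}_n$ of size at most $p(n)$ such that: (i) there is a delay function $f$ for which Player $O$ has a winning strategy $\tau_O$ in $\Gamma_f(L_n)$ with $\mathrm{Cst}(\tau_O)=n$; and (ii) for every delay function $f$, if Player $O$ has a winning strategy $\tau_O$ in $\Gamma_f(L_n)$ with $\mathrm{Cst}(\tau_O)=n$, then $f$ eventually grants a lookahead of size $n\cdot(2^{2^n}-1)$.
   Context: A Streett automaton with costs is a tuple $\mathcal{A}=(Q,\Sigma,q_I,\delta,(Q_j,P_j)_{j\in J},(\mathrm{Cst}_j)_{j\in J})$ with a finite set $Q$ of states, a finite alphabet $\Sigma$, an initial state $q_I$, a deterministic complete transition function $\delta\colon Q\times\Sigma\to Q$, a finite family of Streett pairs $(Q_j,P_j)$ with $Q_j,P_j\subseteq Q$, and for each $j\in J$ a cost function $\mathrm{Cst}_j$ assigning to every transition $(q,a,\delta(q,a))$ either $\epsilon$ or $\mathtt{i}$. Its size is $|Q|+|J|$. The run on $a_0a_1\cdots$ is $\rho=(q_0,a_0,q_1)(q_1,a_1,q_2)\cdots$ with $q_0=q_I$, $q_{m+1}=\delta(q_m,a_m)$. For position $n$, $\mathrm{StCor}_j(\rho,n)=0$ if $q_n\notin Q_j$, and otherwise it is the minimum, over all $n'\ge n$ with $q_{n'}\in P_j$, of the number of transitions among $(q_n,a_n,q_{n+1})\cdots(q_{n'-1},a_{n'-1},q_{n'})$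 that $\mathrm{Cst}_j$ maps to $\mathtt{i}$ ($\min\emptyset=\infty$). Let $\mathrm{StCor}(\rho,n)=\max_{j\in J}\mathrm{StCor}_j(\rho,n)$. The run is accepting if $\limsup_{n\to\infty}\mathrm{StCor}(\rho,n)<\infty$, and $L(\mathcal{A})$ is the set of infinite words whose run is accepting. A delay function is a map $f\colon\mathbb{N}\to\mathbb{N}\setminus\{0\}$; it eventually grants a lookahead of size $m$ if there is an $i$ with $\sum_{0\le i'\le i}(f(i')-1)\ge m$. For $L\subseteq(\Sigma_I\times\Sigma_O)^\omega$, the delay game $\Gamma_f(L)$ is played in rounds $i=0,1,2,\ldots$: in round $i$, Player $I$ picks $u_i\in\Sigma_I^{f(i)}$, then Player $O$ picks $v_i\in\Sigma_O$. Player $O$ wins the play if the outcome, i.e., the word over $\Sigma_I\times\Sigma_O$ pairing $u_0u_1u_2\cdots$ and $v_0v_1v_2\cdots$ letterwise, is in $L$. A strategy for Player $O$ is a map $\tau_O\colon\Sigma_I^*\to\Sigma_O$; a play is consistent with $\tau_O$ if $v_i=\tau_O(u_0\cdots u_i)$ for all $i$; $\tau_O$ is winning if every consistent play is won by Player $O$. For a winning strategy $\tau_O$ in $\Gamma_f(L(\mathcal{A}_n))$, its cost is $\mathrm{Cst}(\tau_O)=\sup_w\limsup_{m\to\infty}\mathrm{StCor}(\rho(w),m)$, where $w$ ranges over outcomes of plays consistent with $\tau_O$ and $\rho(w)$ is the run of $\mathcal{A}_n$ on $w$. *)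

theory Defs
  imports Main "HOL-Library.Extended_Nat" "HOL-Library.Liminf_Limsup"
    "HOL-Computational_Algebra.Polynomial"
begin

text \<open>The cost function of pair j on the transition (q, a, delta q a) is st_cost A j q a,
  where True stands for the increment i and False for epsilon.\<close>

record 'a streett_cost =
  st_states :: "nat set"
  st_alph   :: "'a set"
  st_init   :: nat
  st_delta  :: "nat \<Rightarrow> 'a \<Rightarrow> nat"
  st_pairs  :: "nat set"
  st_Q      :: "nat \<Rightarrow> nat set"
  st_P      :: "nat \<Rightarrow> nat set"
  st_cost   :: "nat \<Rightarrow> nat \<Rightarrow> 'a \<Rightarrow> bool"

definition wf_streett_cost :: "'a streett_cost \<Rightarrow> bool" where
  "wf_streett_cost A \<longleftrightarrow>
     finite (st_states A) \<and> finite (st_alph A) \<and> finite (st_pairs A) \<and>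
     st_init A \<in> st_states A \<and>
     (\<forall>q\<in>st_states A. \<forall>a\<in>st_alph A. st_delta A q a \<in> st_states A) \<and>
     (\<forall>j\<in>st_pairs A. st_Q A j \<subseteq> st_states A \<and> st_P A j \<subseteq> st_states A)"

definition sc_size :: "'a streett_cost \<Rightarrow> nat" where
  "sc_size A = card (st_states A) + card (st_pairs A)"

fun run_state :: "'a streett_cost \<Rightarrow> (nat \<Rightarrow> 'a) \<Rightarrow> nat \<Rightarrow> nat" where
  "run_state A w 0 = st_init A"
| "run_state A w (Suc n) = st_delta A (run_state A w n) (w n)"

definition StCor_j :: "'a streett_cost \<Rightarrow> (nat \<Rightarrow> 'a) \<Rightarrow> nat \<Rightarrow> nat \<Rightarrow> enat" where
  "StCor_j A w j n =
     (if run_state A w n \<notin> st_Q A j then 0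
      else (INF n' \<in> {n'. n \<le> n' \<and> run_state A w n' \<in> st_P A j}.
              enat (card {k \<in> {n..<n'}. st_cost A j (run_state A w k) (w k)})))"

definition StCor :: "'a streett_cost \<Rightarrow> (nat \<Rightarrow> 'a) \<Rightarrow> nat \<Rightarrow> enat" where
  "StCor A w n = (SUP j \<in> st_pairs A. StCor_j A w j n)"

definition run_limsup :: "'a streett_cost \<Rightarrow> (nat \<Rightarrow> 'a) \<Rightarrow> enat" where
  "run_limsup A w = limsup (\<lambda>n. StCor A w n)"

definition sc_lang :: "'a streett_cost \<Rightarrow> (nat \<Rightarrow> 'a) set" where
  "sc_lang A = {w. (\<forall>n. w n \<in> st_alph A) \<and> run_limsup A w < \<infinity>}"

definition delay_fun :: "(nat \<Rightarrow> nat) \<Rightarrow> bool" where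
  "delay_fun f \<longleftrightarrow> (\<forall>i. f i \<noteq> 0)"

definition grants_lookahead :: "(nat \<Rightarrow> nat) \<Rightarrow> nat \<Rightarrow> bool" where
  "grants_lookahead f m \<longleftrightarrow> (\<exists>i. (\<Sum>i'\<le>i. (f i' - 1)) \<ge> m)"

text \<open>A play is determined by the infinite sequence x of letters picked by
  Player I (u_0 u_1 ... = x); in round i Player O answers v_i = tau (u_0 ... u_i), where
  u_0 ... u_i is the prefix of x of length f 0 + ... + f i.\<close>
definition game_outcome :: "(nat \<Rightarrow> nat) \<Rightarrow> ('i list \<Rightarrow> 'o) \<Rightarrow> (nat \<Rightarrow> 'i) \<Rightarrow> nat \<Rightarrow> 'i \<times> 'o" where
  "game_outcome f tau x k = (x k, tau (map x [0..<(\<Sum>i'\<le>k. f i')]))"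

definition game_outcomes :: "'i set \<Rightarrow> (nat \<Rightarrow> nat) \<Rightarrow> ('i list \<Rightarrow> 'o) \<Rightarrow> (nat \<Rightarrow> 'i \<times> 'o) set" where
  "game_outcomes SI f tau = {game_outcome f tau x | x. \<forall>k. x k \<in> SI}"

definition winning_strategy ::
    "'i set \<Rightarrow> (nat \<Rightarrow> nat) \<Rightarrow> (nat \<Rightarrow> 'i \<times> 'o) set \<Rightarrow> ('i list \<Rightarrow> 'o) \<Rightarrow> bool" where
  "winning_strategy SI f L tau \<longleftrightarrow> game_outcomes SI f tau \<subseteq> L"

definition strategy_cost ::
    "('i \<times> 'o) streett_cost \<Rightarrow> 'i set \<Rightarrow> (nat \<Rightarrow> nat) \<Rightarrow> ('i list \<Rightarrow> 'o) \<Rightarrow> enat" where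
  "strategy_cost A SI f tau = (SUP w \<in> game_outcomes SI f tau. run_limsup A w)"

end

theory Submission
  imports Defs
begin

definition badp :: "(nat \<Rightarrow> nat) \<Rightarrow> nat \<Rightarrow> nat \<Rightarrow> bool" where
  "badp y a b = (a < b \<and> y a = y b \<and> (\<forall>d. a < d \<and> d < b \<longrightarrow> y d < y a))"

lemma bad_exists:
  "2^K \<le> l \<Longrightarrow> (\<And>p. s \<le> p \<Longrightarrow> p < s + l \<Longrightarrow> y p < K) \<Longrightarrow> \<exists>a b. s \<le> a \<and> b < s + l \<and> badp y a b"
proof (induction K arbitrary: s l)
  case 0
  have "s < s + l" using "0.prems"(1) by simp
  then show ?case using "0.prems"(2)[of s] by simp
next
  case (Suc K)
  show ?case
  proof (cases "\<exists>p q. s \<le> p \<and> p < q \<and> q < s + l \<and> y p = K \<and> y q = K")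
    case True
    then obtain p q where pq: "s \<le> p" "p < q" "q < s + l" "y p = K" "y q = K" by blast
    define q' where "q' = (LEAST q. p < q \<and> y q = K)"
    have q'1: "p < q' \<and> y q' = K" unfolding q'_def by (rule LeastI[of _ q]) (use pq in auto)
    have q'2: "q' \<le> q" unfolding q'_def by (rule Least_le) (use pq in auto)
    have "\<forall>d. p < d \<and> d < q' \<longrightarrow> y d < y p"
    proof (intro allI impI)
      fix d assume d: "p < d \<and> d < q'"
      then have "\<not> (p < d \<and> y d = K)" unfolding q'_def using not_less_Least by blast
      then have "y d \<noteq> K" using d by blast
      moreover have "y d < Suc K" using Suc.prems(2)[of d] d pq q'2 by auto
      ultimately show "y d < y p" using pq by simp
    qed
    then have "badp y p q'" unfolding badp_def using q'1 pq by auto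
    then show ?thesis using pq q'2 by (intro exI[of _ p] exI[of _ q']) auto
  next
    case False
    show ?thesis
    proof (cases "\<exists>p. s \<le> p \<and> p < s + l \<and> y p = K")
      case True
      then obtain p where p: "s \<le> p" "p < s + l" "y p = K" by blast
      have ne: "\<And>q. s \<le> q \<Longrightarrow> q < s + l \<Longrightarrow> q \<noteq> p \<Longrightarrow> y q < K"
      proof -
        fix q assume q: "s \<le> q" "q < s + l" "q \<noteq> p"
        have "y q \<noteq> K"
        proof
          assume "y q = K"
          show False
          proof (cases "q < p")
            case True
            then show False using False p q \<open>y q = K\<close> by blast
          next
            case False
            then have "p < q" using q by simp
            then show False using \<open>\<not> (\<exists>p q. s \<le> p \<and> p < q \<and> q < s + l \<and> y p = K \<and> y q = K)\<close> p q \<open>y q = K\<close> by blast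
          qed
        qed
        moreover have "y q < Suc K" using Suc.prems(2) q by auto
        ultimately show "y q < K" by simp
      qed
      have sum: "(p - s) + (s + l - Suc p) + 1 = l" using p by simp
      have "2 * 2^K \<le> l" using Suc.prems(1) by simp
      then consider "2^K \<le> p - s" | "2^K \<le> s + l - Suc p" using sum by linarith
      then show ?thesis
      proof cases
        case 1
        obtain a b where "s \<le> a" "b < s + (p - s)" "badp y a b"
          using Suc.IH[OF 1, of s] ne p by force
        then show ?thesis using p by (intro exI[of _ a] exI[of _ b]) auto
      next
        case 2
        obtain a b where "Suc p \<le> a" "b < Suc p + (s + l - Suc p)" "badp y a b"
          using Suc.IH[OF 2, of "Suc p"] ne p by force
        then show ?thesis using p by (intro exI[of _ a] exI[of _ b]) auto
      qed
    next
      case False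
      have "2^K \<le> l" using Suc.prems(1) by simp
      moreover have "\<And>p. s \<le> p \<Longrightarrow> p < s + l \<Longrightarrow> y p < K"
        using Suc.prems(2) False by (metis less_SucE)
      ultimately show ?thesis using Suc.IH by blast
    qed
  qed
qed

fun tz :: "nat \<Rightarrow> nat" where
  "tz m = (if m = 0 \<or> odd m then 0 else Suc (tz (m div 2)))"

declare tz.simps[simp del]

lemma tz_dvd: "2^(tz m) dvd m"
proof (induction m rule: tz.induct)
  case (1 m)
  show ?case
  proof (cases "m = 0 \<or> odd m")
    case True then show ?thesis by (subst tz.simps) auto
  next
    case False
    then have "2^(tz (m div 2)) dvd m div 2" using 1 by auto
    then have "2 * 2^(tz (m div 2)) dvd 2 * (m div 2)" by simp
    then show ?thesis using False by (subst tz.simps) auto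
  qed
qed

lemma tz_ge: "m > 0 \<Longrightarrow> 2^k dvd m \<Longrightarrow> k \<le> tz m"
proof (induction m arbitrary: k rule: tz.induct)
  case (1 m)
  show ?case
  proof (cases k)
    case 0 then show ?thesis by simp
  next
    case (Suc k')
    then have ev: "even m" using "1.prems"(2) by (metis dvd_mult_left power_Suc)
    then have m2: "m div 2 > 0" using "1.prems"(1) by (auto elim!: evenE)
    have "2^k' dvd m div 2" using "1.prems"(2) Suc ev by (auto elim!: evenE)
    then have "k' \<le> tz (m div 2)" using 1 ev "1.prems"(1) m2 by auto
    then show ?thesis using Suc ev "1.prems"(1) by (subst tz.simps) auto
  qed
qed

lemma tz_lt: "0 < m \<Longrightarrow> m < 2^K \<Longrightarrow> tz m < K"
proof -
  assume m: "0 < m" "m < 2^K"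
  have "2^(tz m) \<le> m" using tz_dvd[of m] m(1) by (simp add: dvd_imp_le)
  then have "(2::nat)^(tz m) < 2^K" using m(2) by linarith
  then show "tz m < K" using power_less_imp_less_exp[of 2] by simp
qed

lemma tz_odd: "0 < m \<Longrightarrow> odd (m div 2^(tz m))"
proof
  assume m: "0 < m" and ev: "even (m div 2^(tz m))"
  have "m = 2^(tz m) * (m div 2^(tz m))" using tz_dvd[of m] by simp
  then have "2^(Suc (tz m)) dvd m" using ev by (metis dvd_mult_left mult_dvd_mono power_Suc dvd_refl mult.commute)
  then have "Suc (tz m) \<le> tz m" using tz_ge m by blast
  then show False by simp
qed

lemma ruler_nobad: "\<not> badp (\<lambda>r. tz (Suc r)) a b"
proof
  assume h: "badp (\<lambda>r. tz (Suc r)) a b"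
  define t where "t = tz (Suc a)"
  have ab: "a < b" and tb: "tz (Suc b) = t" and btw: "\<And>d. a < d \<Longrightarrow> d < b \<Longrightarrow> tz (Suc d) < t"
    using h unfolding badp_def t_def by auto
  define u where "u = Suc a div 2^t"
  define v where "v = Suc b div 2^t"
  have au: "Suc a = 2^t * u" using tz_dvd[of "Suc a"] unfolding u_def t_def by simp
  have bv: "Suc b = 2^t * v" using tz_dvd[of "Suc b"] tb unfolding v_def by (metis dvd_mult_div_cancel)
  have ou: "odd u" using tz_odd[of "Suc a"] unfolding u_def t_def by simp
  have ov: "odd v" using tz_odd[of "Suc b"] tb unfolding v_def by simp
  have uv: "u < v" using ab au bv by (metis Suc_less_eq mult_less_cancel1)
  have uv2: "Suc u < v" using uv ou ov by (metis Suc_lessI even_Suc)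
  define m where "m = 2^t * Suc u"
  have m1: "Suc a < m" unfolding m_def au by simp
  have m2: "m < Suc b" unfolding m_def bv using uv2 by (intro mult_strict_left_mono) auto
  obtain k where k: "Suc u = 2 * k" using ou by (metis even_Suc evenE)
  have "m = 2^(Suc t) * k" unfolding m_def k by simp
  then have "2^(Suc t) dvd m" by simp
  then have "Suc t \<le> tz m" using tz_ge m1 by simp
  moreover have "tz (Suc (m - 1)) < t" using btw[of "m - 1"] m1 m2 by simp
  moreover have "Suc (m - 1) = m" using m1 by simp
  ultimately show False by simp
qed



definition NN :: "nat \<Rightarrow> nat" where "NN n = 2^n + n"
definition PP :: "nat \<Rightarrow> nat" where "PP n = n + 2"
definition BB :: "nat \<Rightarrow> nat" where "BB n = n + 1"
definition SK :: "nat \<Rightarrow> nat" where "SK n = 16 * PP n"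
definition NP :: "nat \<Rightarrow> nat" where "NP n = 4 * BB n * PP n"

definition iy :: "nat \<Rightarrow> nat" where "iy i = i div 4"
definition ist :: "nat \<Rightarrow> bool" where "ist i = odd (i div 2)"
definition inb :: "nat \<Rightarrow> bool" where "inb i = odd i"
definition oj :: "nat \<Rightarrow> nat \<Rightarrow> nat" where "oj n v = v div NN n"
definition ok :: "nat \<Rightarrow> nat \<Rightarrow> nat" where "ok n v = v mod NN n"

type_synonym fl = "bool \<times> bool \<times> bool \<times> bool"

fun fstep :: "nat \<Rightarrow> fl \<Rightarrow> nat \<times> nat \<Rightarrow> fl" where
 "fstep n (oo, os, it, lic) (i, v) =
   (let y = iy i; j = oj n v; k = ok n v; r = inb i;
        oo1 = (\<not> r \<and> oo); os1 = (\<not> r \<and> os); it1 = (\<not> r \<and> it); lic1 = (\<not> r \<and> lic) in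
   (y = j \<or> (y < j \<and> oo1), os1 \<or> (y = j \<and> oo1), ist i \<or> (it1 \<and> y < k),
    lic1 \<or> (\<not> ist i \<and> it1 \<and> y = k)))"

fun ffail :: "nat \<Rightarrow> fl \<Rightarrow> nat \<times> nat \<Rightarrow> bool" where
 "ffail n (oo, os, it, lic) (i, v) = ((ist i \<and> ok n v \<noteq> iy i) \<or> (inb i \<and> lic \<and> \<not> os))"

fun fcode :: "fl \<Rightarrow> nat" where
 "fcode (a, b, c, d) = of_bool a + 2 * of_bool b + 4 * of_bool c + 8 * of_bool d"
definition fdec :: "nat \<Rightarrow> fl" where
 "fdec m = (odd m, odd (m div 2), odd (m div 4), odd (m div 8))"

lemma fdec_fcode[simp]: "fdec (fcode x) = x"
  by (cases x) (auto simp: fdec_def)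
lemma fcode_lt: "fcode x < 16"
  by (cases x) auto

definition dlt :: "nat \<Rightarrow> nat \<Rightarrow> nat \<times> nat \<Rightarrow> nat" where
 "dlt n q a = (if SK n \<le> q then SK n else if ffail n (fdec (q div PP n)) a then SK n
    else Suc (q mod PP n) mod PP n + PP n * fcode (fstep n (fdec (q div PP n)) a))"

definition eph :: "nat \<Rightarrow> nat \<Rightarrow> nat" where "eph n e = e mod PP n"
definition ei :: "nat \<Rightarrow> nat \<Rightarrow> nat" where "ei n e = (e div PP n) mod BB n"
definition eb :: "nat \<Rightarrow> nat \<Rightarrow> bool" where "eb n e = odd (e div PP n div BB n)"
definition et :: "nat \<Rightarrow> nat \<Rightarrow> nat" where "et n e = e div PP n div BB n div 2"
definition bitv :: "nat \<Rightarrow> nat \<Rightarrow> bool" where "bitv x i = odd (x div 2^i)"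
definition tval :: "nat \<Rightarrow> nat \<Rightarrow> nat \<times> nat \<Rightarrow> nat" where
 "tval n e a = (if et n e = 0 then oj n (snd a) else ok n (snd a))"
definition tex :: "nat \<Rightarrow> nat \<Rightarrow> nat \<times> nat \<Rightarrow> bool" where
 "tex n e a = (if et n e = 0 then inb (fst a) else ist (fst a))"
definition Qs :: "nat \<Rightarrow> nat \<Rightarrow> nat set" where
 "Qs n e = (if e = NP n then {SK n} else {q. q < SK n \<and> q mod PP n = eph n e})"
definition Ps :: "nat \<Rightarrow> nat \<Rightarrow> nat set" where
 "Ps n e = (if e = NP n then {} else {q. q < SK n \<and> q mod PP n = (eph n e + n + 1) mod PP n})"
definition cst :: "nat \<Rightarrow> nat \<Rightarrow> nat \<Rightarrow> nat \<times> nat \<Rightarrow> bool" where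
 "cst n e q a = (e < NP n \<and> q < SK n \<and>
    (let d = (q mod PP n + PP n - eph n e) mod PP n in
      (d = 0 \<and> bitv (tval n e a) (ei n e) = eb n e) \<or>
      (d = 1 \<and> bitv (tval n e a) (ei n e) \<noteq> eb n e \<and> \<not> tex n e a) \<or>
      (2 \<le> d \<and> d \<le> n)))"

definition Aut :: "nat \<Rightarrow> (nat \<times> nat) streett_cost" where
 "Aut n = \<lparr>st_states = {..SK n}, st_alph = {..<4 * NN n} \<times> {..<NN n * NN n}, st_init = 0,
    st_delta = dlt n, st_pairs = {..NP n}, st_Q = Qs n, st_P = Ps n, st_cost = cst n\<rparr>"

primrec frun :: "nat \<Rightarrow> (nat \<Rightarrow> nat \<times> nat) \<Rightarrow> nat \<Rightarrow> fl" where
  "frun n w 0 = (False, False, False, False)"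
| "frun n w (Suc c) = fstep n (frun n w c) (w c)"

definition failed :: "nat \<Rightarrow> (nat \<Rightarrow> nat \<times> nat) \<Rightarrow> nat \<Rightarrow> bool" where
 "failed n w c = (\<exists>d<c. ffail n (frun n w d) (w d))"

lemma enc_lt: "c mod PP n + PP n * fcode x < SK n"
proof -
  have "c mod PP n < PP n" by (simp add: PP_def)
  moreover have "fcode x \<le> 15" using fcode_lt[of x] by simp
  hence "PP n * fcode x \<le> PP n * 15" by simp
  moreover have "SK n = PP n + PP n * 15" by (simp add: SK_def)
  ultimately show ?thesis by linarith
qed

lemma enc_mod: "(c mod PP n + PP n * m) mod PP n = c mod PP n"
  by simp
lemma PP_pos: "PP n > 0" by (simp add: PP_def)
lemma enc_div: "(c mod PP n + PP n * m) div PP n = m"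
  using PP_pos[of n] by simp

lemma run_state_Aut:
  "run_state (Aut n) w c = (if failed n w c then SK n else c mod PP n + PP n * fcode (frun n w c))"
proof (induction c)
  case 0
  then show ?case by (simp add: Aut_def failed_def fcode.simps)
next
  case (Suc c)
  show ?case
  proof (cases "failed n w c")
    case True
    then have "failed n w (Suc c)" unfolding failed_def by (meson less_SucI)
    with True Suc show ?thesis by (simp add: Aut_def dlt_def)
  next
    case False
    have lt: "\<not> SK n \<le> c mod PP n + PP n * fcode (frun n w c)" using enc_lt[of c n "frun n w c"] by simp
    have fd: "fdec ((c mod PP n + PP n * fcode (frun n w c)) div PP n) = frun n w c"
      by (simp only: enc_div fdec_fcode)
    have md: "(c mod PP n + PP n * fcode (frun n w c)) mod PP n = c mod PP n" by simp
    have fs: "failed n w (Suc c) = ffail n (frun n w c) (w c)"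
      using False by (auto simp: failed_def less_Suc_eq)
    show ?thesis using False Suc lt
      by (simp add: Aut_def dlt_def fd md fs mod_Suc_eq)
  qed
qed

lemma Aut_simps[simp]: "st_Q (Aut n) = Qs n" "st_P (Aut n) = Ps n" "st_cost (Aut n) = cst n"
  "st_pairs (Aut n) = {..NP n}" "st_alph (Aut n) = {..<4 * NN n} \<times> {..<NN n * NN n}"
  "st_states (Aut n) = {..SK n}" "st_init (Aut n) = 0" "st_delta (Aut n) = dlt n"
  by (simp_all add: Aut_def)

lemma failed_mono: "failed n w c \<Longrightarrow> c \<le> c' \<Longrightarrow> failed n w c'"
  unfolding failed_def by (meson less_le_trans)

lemma rs_nf: "\<not> failed n w c \<Longrightarrow> run_state (Aut n) w c = c mod PP n + PP n * fcode (frun n w c)"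
  by (simp add: run_state_Aut)

lemma NP_ne: "e < NP n \<Longrightarrow> e \<noteq> NP n" by simp

lemma rs_Q: assumes "\<not> failed n w c" "e < NP n"
  shows "run_state (Aut n) w c \<in> Qs n e \<longleftrightarrow> c mod PP n = eph n e"
  using assms enc_lt[of c n "frun n w c"] by (simp add: rs_nf Qs_def)

lemma rs_P: assumes "\<not> failed n w c" "e < NP n"
  shows "run_state (Aut n) w c \<in> Ps n e \<longleftrightarrow> c mod PP n = (eph n e + n + 1) mod PP n"
  using assms enc_lt[of c n "frun n w c"] by (simp add: rs_nf Ps_def)

lemma modd: assumes "t < PP n" shows "((c + t) mod PP n + PP n - c mod PP n) mod PP n = t"
proof -
  define P where "P = PP n"
  have P0: "P > 0" by (simp add: P_def PP_def)
  have tP: "t < P" using assms by (simp add: P_def)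
  define r where "r = c mod P"
  have rP: "r < P" using P0 by (simp add: r_def)
  have e1: "(c + t) mod P = (r + t) mod P" by (simp add: r_def mod_add_left_eq)
  show ?thesis
  proof (cases "r + t < P")
    case True
    then have "(r + t) mod P = r + t" by simp
    then have "(c + t) mod P + P - r = t + P" using e1 by simp
    then show ?thesis using tP by (simp add: P_def[symmetric] r_def[symmetric])
  next
    case False
    then have "(r + t) mod P = r + t - P"
      using rP tP by (simp add: mod_if)
    then have "(c + t) mod P + P - r = t" using e1 False by simp
    then show ?thesis using tP by (simp add: P_def[symmetric] r_def[symmetric])
  qed
qed

lemma mod_sh: "(c + n + 1) mod PP n = (c mod PP n + n + 1) mod PP n"
  by (metis add.assoc mod_add_left_eq)

lemma first_P: assumes "c \<le> m" "m mod PP n = (c mod PP n + n + 1) mod PP n"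
  shows "c + n + 1 \<le> m"
proof (rule ccontr)
  assume "\<not> ?thesis"
  then have lt: "m < c + n + 1" by simp
  have "(c + n + 1) mod PP n = m mod PP n" using assms(2) mod_sh[of c n] by simp
  then have "PP n dvd (c + n + 1 - m)" using lt by (simp add: mod_eq_dvd_iff_nat)
  moreover have "0 < c + n + 1 - m" using lt by simp
  ultimately have "PP n \<le> c + n + 1 - m" by (simp add: dvd_imp_le)
  then show False using assms(1) by (simp add: PP_def)
qed

lemma card_pat: assumes "n \<ge> 1" "\<And>t. 2 \<le> t \<Longrightarrow> t \<le> n \<Longrightarrow> C (c + t)"
  shows "card {k \<in> {c..<c+n+1}. C k} = of_bool (C c) + of_bool (C (Suc c)) + (n - 1)"
proof -
  have eq: "{k \<in> {c..<c+n+1}. C k} = {k \<in> {c, Suc c}. C k} \<union> {c+2..<c+n+1}"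
  proof (intro set_eqI iffI)
    fix k assume "k \<in> {k \<in> {c..<c+n+1}. C k}"
    then show "k \<in> {k \<in> {c, Suc c}. C k} \<union> {c+2..<c+n+1}" by auto
  next
    fix k assume k: "k \<in> {k \<in> {c, Suc c}. C k} \<union> {c+2..<c+n+1}"
    show "k \<in> {k \<in> {c..<c+n+1}. C k}"
    proof (cases "k \<in> {c+2..<c+n+1}")
      case True
      then have "C (c + (k - c))" using assms(2)[of "k - c"] by auto
      then show ?thesis using True by auto
    next
      case False
      then show ?thesis using k assms(1) by auto
    qed
  qed
  have disj: "{k \<in> {c, Suc c}. C k} \<inter> {c+2..<c+n+1} = {}" by auto
  have c0: "{k \<in> {c, Suc c}. C k} = (if C c then {c} else {}) \<union> (if C (Suc c) then {Suc c} else {})"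
    by auto
  have c1: "card {k \<in> {c, Suc c}. C k} = of_bool (C c) + of_bool (C (Suc c))"
    unfolding c0 by (cases "C c"; cases "C (Suc c)") auto
  have "card ({k \<in> {c, Suc c}. C k} \<union> {c+2..<c+n+1}) =
        card {k \<in> {c, Suc c}. C k} + card {c+2..<c+n+1}"
    by (rule card_Un_disjoint) (use disj in auto)
  then show ?thesis using eq c1 assms(1) by simp
qed

lemma StCor_j_nf:
  assumes nf: "\<And>c. \<not> failed n w c" and e: "e < NP n"
  shows "StCor_j (Aut n) w e c = (if c mod PP n = eph n e then
     enat (card {k \<in> {c..<c+n+1}. cst n e (run_state (Aut n) w k) (w k)}) else 0)"
proof (cases "c mod PP n = eph n e")
  case False
  then show ?thesis using rs_Q[OF nf e, of c] by (simp add: StCor_j_def Aut_def)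
next
  case True
  define g where "g = (\<lambda>m. enat (card {k \<in> {c..<m}. cst n e (run_state (Aut n) w k) (w k)}))"
  define S where "S = {m. c \<le> m \<and> run_state (Aut n) w m \<in> Ps n e}"
  have S_eq: "S = {m. c \<le> m \<and> m mod PP n = (c mod PP n + n + 1) mod PP n}"
    unfolding S_def using rs_P[OF nf e] True by auto
  have inS: "c + n + 1 \<in> S" unfolding S_eq using mod_sh[of c n] by simp
  have ge: "\<And>m. m \<in> S \<Longrightarrow> g (c + n + 1) \<le> g m"
  proof -
    fix m assume "m \<in> S"
    then have "c + n + 1 \<le> m" using first_P unfolding S_eq by auto
    then have "{k \<in> {c..<c+n+1}. cst n e (run_state (Aut n) w k) (w k)} \<subseteq>
               {k \<in> {c..<m}. cst n e (run_state (Aut n) w k) (w k)}" by auto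
    then show "g (c + n + 1) \<le> g m" unfolding g_def by (simp add: card_mono)
  qed
  have "(INF m \<in> S. g m) = g (c + n + 1)"
  proof (rule antisym)
    show "(INF m \<in> S. g m) \<le> g (c + n + 1)" using inS by (rule INF_lower)
    show "g (c + n + 1) \<le> (INF m \<in> S. g m)" using ge by (rule INF_greatest)
  qed
  then show ?thesis using True rs_Q[OF nf e, of c]
    by (simp add: StCor_j_def Aut_def S_def g_def)
qed

lemma cst_at:
  assumes nf: "\<And>c. \<not> failed n w c" and e: "e < NP n" and ph: "c mod PP n = eph n e" and t: "t \<le> n"
  shows "cst n e (run_state (Aut n) w (c + t)) (w (c + t)) \<longleftrightarrow>
     ((t = 0 \<and> bitv (tval n e (w (c + t))) (ei n e) = eb n e) \<or>
      (t = 1 \<and> bitv (tval n e (w (c + t))) (ei n e) \<noteq> eb n e \<and> \<not> tex n e (w (c + t))) \<or>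
      (2 \<le> t \<and> t \<le> n))"
proof -
  have tP: "t < PP n" using t by (simp add: PP_def)
  have d: "((c + t) mod PP n + PP n - eph n e) mod PP n = t" using modd[OF tP, of c] ph by simp
  have rs: "run_state (Aut n) w (c + t) = (c + t) mod PP n + PP n * fcode (frun n w (c + t))"
    using nf by (simp add: rs_nf)
  have lt: "(c + t) mod PP n + PP n * fcode (frun n w (c + t)) < SK n" by (rule enc_lt)
  show ?thesis unfolding rs cst_def using e lt d by (simp add: Let_def)
qed

lemma card_cst:
  assumes nf: "\<And>c. \<not> failed n w c" and e: "e < NP n" and ph: "c mod PP n = eph n e" and n1: "n \<ge> 1"
  shows "card {k \<in> {c..<c+n+1}. cst n e (run_state (Aut n) w k) (w k)} =
     of_bool (bitv (tval n e (w c)) (ei n e) = eb n e) +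
     of_bool (bitv (tval n e (w (Suc c))) (ei n e) \<noteq> eb n e \<and> \<not> tex n e (w (Suc c))) + (n - 1)"
proof -
  have A: "cst n e (run_state (Aut n) w c) (w c) = (bitv (tval n e (w c)) (ei n e) = eb n e)"
    using cst_at[OF nf e ph, of 0] by simp
  have B: "cst n e (run_state (Aut n) w (Suc c)) (w (Suc c)) =
      (bitv (tval n e (w (Suc c))) (ei n e) \<noteq> eb n e \<and> \<not> tex n e (w (Suc c)))"
    using cst_at[OF nf e ph, of 1] n1 by simp
  have C: "\<And>t. 2 \<le> t \<Longrightarrow> t \<le> n \<Longrightarrow> cst n e (run_state (Aut n) w (c + t)) (w (c + t))"
    using cst_at[OF nf e ph] by simp
  show ?thesis using card_pat[OF n1, of "\<lambda>k. cst n e (run_state (Aut n) w k) (w k)" c, OF C] A B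
    by simp
qed

lemma e_enc:
  fixes c :: nat and b :: bool
  assumes i: "i < BB n" and t: "t \<le> 1"
  defines "e \<equiv> c mod PP n + PP n * (i + BB n * (of_bool b + 2 * t))"
  shows "e < NP n" "eph n e = c mod PP n" "ei n e = i" "eb n e = b" "et n e = t"
proof -
  have B0: "BB n > 0" by (simp add: BB_def)
  have dv: "e div PP n = i + BB n * (of_bool b + 2 * t)" unfolding e_def by (rule enc_div)
  have r2: "(i + BB n * (of_bool b + 2 * t)) div BB n = of_bool b + 2 * t" using i B0 by simp
  have r1: "(i + BB n * (of_bool b + 2 * t)) mod BB n = i" using i by simp
  show "eph n e = c mod PP n" unfolding eph_def e_def by simp
  show "ei n e = i" unfolding ei_def dv r1 ..
  show "eb n e = b" unfolding eb_def dv r2 by simp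
  show "et n e = t" unfolding et_def dv r2 by simp
  have "i + BB n * (of_bool b + 2 * t) < 4 * BB n"
  proof -
    have "of_bool b + 2 * t \<le> (3::nat)" using t by (cases b) auto
    then have "BB n * (of_bool b + 2 * t) \<le> BB n * 3" by simp
    then show ?thesis using i by linarith
  qed
  then have "e div PP n + 1 \<le> 4 * BB n" using dv by simp
  then have "PP n * (e div PP n + 1) \<le> PP n * (4 * BB n)" by (rule mult_le_mono2)
  moreover have "e < PP n * (e div PP n + 1)"
  proof -
    have "e mod PP n < PP n" using PP_pos[of n] by simp
    moreover have "e = PP n * (e div PP n) + e mod PP n" by simp
    moreover have "PP n * (e div PP n + 1) = PP n * (e div PP n) + PP n" by (simp add: algebra_simps)
    ultimately show ?thesis by linarith
  qed
  ultimately show "e < NP n" unfolding NP_def by (simp add: algebra_simps)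
qed

definition bdiff :: "nat \<Rightarrow> nat \<Rightarrow> nat \<Rightarrow> bool" where
  "bdiff n x y = (\<exists>i<BB n. bitv x i \<noteq> bitv y i)"

definition spike :: "nat \<Rightarrow> (nat \<Rightarrow> nat \<times> nat) \<Rightarrow> nat \<Rightarrow> bool" where
  "spike n w c = ((bdiff n (oj n (snd (w c))) (oj n (snd (w (Suc c)))) \<and> \<not> inb (fst (w (Suc c)))) \<or>
     (bdiff n (ok n (snd (w c))) (ok n (snd (w (Suc c)))) \<and> \<not> ist (fst (w (Suc c)))))"

lemma StCor_def2: "StCor (Aut n) w c = (SUP e \<in> {..NP n}. StCor_j (Aut n) w e c)"
  by (simp add: StCor_def)

lemma StCor_sinkpair_nf: assumes "\<not> failed n w c" shows "StCor_j (Aut n) w (NP n) c = 0"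
  using assms enc_lt[of c n "frun n w c"] by (simp add: StCor_j_def Qs_def rs_nf)

lemma StCor_upper:
  assumes nf: "\<And>c. \<not> failed n w c" and n1: "n \<ge> 1" and ns: "\<not> spike n w c"
  shows "StCor (Aut n) w c \<le> enat n"
  unfolding StCor_def2
proof (rule SUP_least)
  fix e assume "e \<in> {..NP n}"
  then consider "e < NP n" | "e = NP n" by force
  then show "StCor_j (Aut n) w e c \<le> enat n"
  proof cases
    case 2
    then show ?thesis using StCor_sinkpair_nf[OF nf] by simp
  next
    case 1
    note e = this
    show ?thesis
    proof (cases "c mod PP n = eph n e")
      case False
      then show ?thesis by (simp add: StCor_j_nf[OF nf e])
    next
      case True
      have "\<not> (bitv (tval n e (w c)) (ei n e) = eb n e \<and>
           (bitv (tval n e (w (Suc c))) (ei n e) \<noteq> eb n e \<and> \<not> tex n e (w (Suc c))))"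
      proof
        assume h: "bitv (tval n e (w c)) (ei n e) = eb n e \<and>
           (bitv (tval n e (w (Suc c))) (ei n e) \<noteq> eb n e \<and> \<not> tex n e (w (Suc c)))"
        have iB: "ei n e < BB n" by (simp add: ei_def BB_def)
        show False
        proof (cases "et n e = 0")
          case True
          then have "bdiff n (oj n (snd (w c))) (oj n (snd (w (Suc c)))) \<and> \<not> inb (fst (w (Suc c)))"
            using h iB unfolding bdiff_def tval_def tex_def by auto
          then show False using ns unfolding spike_def by blast
        next
          case False
          then have "bdiff n (ok n (snd (w c))) (ok n (snd (w (Suc c)))) \<and> \<not> ist (fst (w (Suc c)))"
            using h iB unfolding bdiff_def tval_def tex_def by auto
          then show False using ns unfolding spike_def by blast
        qed
      qed
      then show ?thesis using True card_cst[OF nf e True n1] n1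
        by (simp add: StCor_j_nf[OF nf e] of_bool_def split: if_splits)
    qed
  qed
qed

lemma StCor_lower:
  assumes nf: "\<And>c. \<not> failed n w c" and n1: "n \<ge> 1"
  shows "enat n + (if spike n w c then 1 else 0) \<le> StCor (Aut n) w c"
proof -
  obtain i t where it: "i < BB n" "t \<le> (1::nat)"
     and sp: "spike n w c \<Longrightarrow> bitv (tval n (c mod PP n + PP n * (i + BB n * (of_bool (bitv (if t = 0 then oj n (snd (w c)) else ok n (snd (w c))) i) + 2 * t))) (w c)) i \<noteq>
           bitv (tval n (c mod PP n + PP n * (i + BB n * (of_bool (bitv (if t = 0 then oj n (snd (w c)) else ok n (snd (w c))) i) + 2 * t))) (w (Suc c))) i
           \<and> \<not> tex n (c mod PP n + PP n * (i + BB n * (of_bool (bitv (if t = 0 then oj n (snd (w c)) else ok n (snd (w c))) i) + 2 * t))) (w (Suc c))"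
  proof (cases "spike n w c")
    case False
    then show ?thesis using that[of 0 0] by (simp add: BB_def)
  next
    case True
    then consider "bdiff n (oj n (snd (w c))) (oj n (snd (w (Suc c)))) \<and> \<not> inb (fst (w (Suc c)))"
      | "bdiff n (ok n (snd (w c))) (ok n (snd (w (Suc c)))) \<and> \<not> ist (fst (w (Suc c)))"
      unfolding spike_def by blast
    then show ?thesis
    proof cases
      case 1
      then obtain i where i: "i < BB n" "bitv (oj n (snd (w c))) i \<noteq> bitv (oj n (snd (w (Suc c)))) i"
        unfolding bdiff_def by blast
      show ?thesis
        by (rule that[of i 0]) (use i 1 e_enc[OF i(1), of 0] in \<open>auto simp: tval_def tex_def\<close>)
    next
      case 2
      then obtain i where i: "i < BB n" "bitv (ok n (snd (w c))) i \<noteq> bitv (ok n (snd (w (Suc c)))) i"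
        unfolding bdiff_def by blast
      show ?thesis
        by (rule that[of i 1]) (use i 2 e_enc[OF i(1), of 1] in \<open>auto simp: tval_def tex_def\<close>)
    qed
  qed
  define b where "b = bitv (if t = 0 then oj n (snd (w c)) else ok n (snd (w c))) i"
  define e where "e = c mod PP n + PP n * (i + BB n * (of_bool b + 2 * t))"
  note E = e_enc[OF it(1) it(2), of c b, folded e_def]
  have tv: "tval n e (w c) = (if t = 0 then oj n (snd (w c)) else ok n (snd (w c)))"
    using E(5) it(2) by (auto simp: tval_def)
  have A: "bitv (tval n e (w c)) (ei n e) = eb n e" using E tv by (simp add: b_def)
  have "StCor_j (Aut n) w e c = enat (of_bool True + of_bool (bitv (tval n e (w (Suc c))) (ei n e) \<noteq> eb n e \<and> \<not> tex n e (w (Suc c))) + (n - 1))"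
    using StCor_j_nf[OF nf E(1)] card_cst[OF nf E(1) _ n1] E(2) A by simp
  moreover have "spike n w c \<Longrightarrow> bitv (tval n e (w (Suc c))) (ei n e) \<noteq> eb n e \<and> \<not> tex n e (w (Suc c))"
    using sp E A unfolding e_def[symmetric] b_def[symmetric] by auto
  ultimately have "enat n + (if spike n w c then 1 else 0) \<le> StCor_j (Aut n) w e c"
    using n1 by (auto simp: one_enat_def)
  also have "\<dots> \<le> StCor (Aut n) w c" unfolding StCor_def2
    by (rule SUP_upper) (use E(1) in auto)
  finally show ?thesis .
qed

lemma StCor_failed:
  assumes "failed n w c" shows "StCor (Aut n) w c = \<infinity>"
proof -
  have "StCor_j (Aut n) w (NP n) c = \<infinity>"
    using assms by (simp add: StCor_j_def Qs_def Ps_def run_state_Aut top_enat_def)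
  moreover have "StCor_j (Aut n) w (NP n) c \<le> StCor (Aut n) w c" unfolding StCor_def2
    by (rule SUP_upper) auto
  ultimately show ?thesis by (simp add: top_enat_def[symmetric] top_unique)
qed

lemma limsup_failed: assumes "failed n w c0" shows "run_limsup (Aut n) w = \<infinity>"
proof -
  have "eventually (\<lambda>c. \<infinity> \<le> StCor (Aut n) w c) sequentially"
    unfolding eventually_sequentially
    using StCor_failed failed_mono[OF assms] by (intro exI[of _ c0]) auto
  then have "\<infinity> \<le> run_limsup (Aut n) w" unfolding run_limsup_def
    by (intro le_Limsup) auto
  then show ?thesis by (simp add: top_enat_def[symmetric] top_unique)
qed

lemma limsup_const_n:
  assumes nf: "\<And>c. \<not> failed n w c" and n1: "n \<ge> 1" and ns: "\<And>c. \<not> spike n w c"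
  shows "run_limsup (Aut n) w = enat n"
proof -
  have "\<And>c. StCor (Aut n) w c = enat n"
    using StCor_upper[OF nf n1 ns] StCor_lower[OF nf n1] ns by (metis add.right_neutral antisym zero_enat_def)
  then have "(\<lambda>c. StCor (Aut n) w c) = (\<lambda>c. enat n)" by auto
  then show ?thesis unfolding run_limsup_def by (simp add: Limsup_const)
qed

lemma limsup_spikes:
  assumes nf: "\<And>c. \<not> failed n w c" and n1: "n \<ge> 1" and sp: "\<And>c0. \<exists>c\<ge>c0. spike n w c"
  shows "enat n + 1 \<le> run_limsup (Aut n) w"
  unfolding run_limsup_def
proof (rule Limsup_greatest)
  fix P assume "eventually P sequentially"
  then obtain N where N: "\<And>c. c \<ge> N \<Longrightarrow> P c" unfolding eventually_sequentially by blast
  obtain c where c: "c \<ge> N" "spike n w c" using sp by blast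
  have "enat n + 1 \<le> StCor (Aut n) w c" using StCor_lower[OF nf n1, of c] c by simp
  also have "\<dots> \<le> Sup ((\<lambda>c. StCor (Aut n) w c) ` Collect P)"
    by (rule Sup_upper) (use N c in auto)
  finally show "enat n + 1 \<le> Sup ((\<lambda>c. StCor (Aut n) w c) ` Collect P)" .
qed



definition blk :: "(nat \<Rightarrow> nat) \<Rightarrow> nat \<Rightarrow> nat" where
  "blk g c = (GREATEST s. s \<le> c \<and> (s = 0 \<or> inb (g s)))"

definition wcond :: "nat \<Rightarrow> (nat \<Rightarrow> nat) \<Rightarrow> nat \<Rightarrow> nat \<Rightarrow> bool" where
  "wcond n g s b = (b < s + 2^NN n \<and> (\<forall>t. s < t \<and> t \<le> b \<longrightarrow> \<not> inb (g t)) \<and>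
     (\<exists>a. s \<le> a \<and> badp (\<lambda>p. iy (g p)) a b))"

definition hj :: "nat \<Rightarrow> (nat \<Rightarrow> nat) \<Rightarrow> nat \<Rightarrow> nat" where
  "hj n g c = (if \<exists>b. wcond n g (blk g c) b then iy (g (LEAST b. wcond n g (blk g c) b)) else 0)"

definition hk :: "(nat \<Rightarrow> nat) \<Rightarrow> nat \<Rightarrow> nat" where
  "hk g c = (if \<exists>t\<le>c. ist (g t) then iy (g (GREATEST t. t \<le> c \<and> ist (g t))) else 0)"

definition hout :: "nat \<Rightarrow> (nat \<Rightarrow> nat) \<Rightarrow> nat \<Rightarrow> nat" where
  "hout n g c = hj n g c * NN n + hk g c"

definition tauh :: "nat \<Rightarrow> nat list \<Rightarrow> nat" where
  "tauh n xs = hout n (\<lambda>p. xs ! p) (length xs - 2^NN n)"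

definition fh :: "nat \<Rightarrow> nat \<Rightarrow> nat" where
  "fh n i = (if i = 0 then 2^NN n else 1)"

lemma badp_cong: "(\<And>p. p \<le> b \<Longrightarrow> y p = y' p) \<Longrightarrow> badp y a b = badp y' a b"
  unfolding badp_def by (metis less_imp_le_nat order_refl)

lemma blk_cong: "(\<And>p. p \<le> c \<Longrightarrow> g p = g' p) \<Longrightarrow> blk g c = blk g' c"
proof -
  assume h: "\<And>p. p \<le> c \<Longrightarrow> g p = g' p"
  have "(\<lambda>s. s \<le> c \<and> (s = 0 \<or> inb (g s))) = (\<lambda>s. s \<le> c \<and> (s = 0 \<or> inb (g' s)))"
    using h by auto
  then show ?thesis unfolding blk_def by simp
qed

lemma blk_props: "blk g c \<le> c" "blk g c = 0 \<or> inb (g (blk g c))"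
proof -
  have "blk g c \<le> c \<and> (blk g c = 0 \<or> inb (g (blk g c)))"
    unfolding blk_def by (rule GreatestI_nat[of _ 0 c]) auto
  then show "blk g c \<le> c" "blk g c = 0 \<or> inb (g (blk g c))" by auto
qed

lemma blk_ge: "s \<le> c \<Longrightarrow> s = 0 \<or> inb (g s) \<Longrightarrow> s \<le> blk g c"
  unfolding blk_def by (rule Greatest_le_nat[of _ _ c]) auto

lemma blk_noinb: "blk g c < t \<Longrightarrow> t \<le> c \<Longrightarrow> \<not> inb (g t)"
  using blk_ge[of t c g] by auto

lemma blk_same: "blk g c \<le> d \<Longrightarrow> d \<le> c \<Longrightarrow> blk g d = blk g c"
proof -
  assume a: "blk g c \<le> d" "d \<le> c"
  have "blk g c \<le> blk g d" using blk_ge[of "blk g c" d g, OF a(1) blk_props(2)[of g c]] .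
  moreover have "blk g d \<le> blk g c" using blk_ge[of "blk g d" c g] blk_props[of g d] a by auto
  ultimately show ?thesis by simp
qed

lemma blk_Suc: "\<not> inb (g (Suc c)) \<Longrightarrow> blk g (Suc c) = blk g c"
proof -
  assume h: "\<not> inb (g (Suc c))"
  have "blk g (Suc c) \<noteq> Suc c" using blk_props(2)[of g "Suc c"] h by auto
  then have "blk g (Suc c) \<le> c" using blk_props(1)[of g "Suc c"] by simp
  then show ?thesis using blk_same[of g "Suc c" c] by simp
qed

lemma blk_inb: "c = 0 \<or> inb (g c) \<Longrightarrow> blk g c = c"
  using blk_ge[of c c g] blk_props(1)[of g c] by auto

lemma wcond_cong:
  assumes "\<And>p. p < c + 2^NN n \<Longrightarrow> g p = g' p" "s \<le> c"
  shows "wcond n g s b = wcond n g' s b"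
proof (cases "b < s + 2^NN n")
  case True
  then have h: "\<And>p. p \<le> b \<Longrightarrow> g p = g' p" using assms by auto
  have "badp (\<lambda>p. iy (g p)) a b = badp (\<lambda>p. iy (g' p)) a b" for a
    by (rule badp_cong) (simp add: h)
  then show ?thesis unfolding wcond_def using h by auto
next
  case False
  then show ?thesis unfolding wcond_def by auto
qed

lemma hout_cong:
  assumes "\<And>p. p < c + 2^NN n \<Longrightarrow> g p = g' p"
  shows "hout n g c = hout n g' c"
proof -
  have le: "\<And>p. p \<le> c \<Longrightarrow> g p = g' p"
  proof -
    fix p assume "p \<le> c"
    moreover have "(0::nat) < 2^NN n" by simp
    ultimately have "p < c + 2^NN n" by linarith
    then show "g p = g' p" by (rule assms)
  qed
  have b: "blk g c = blk g' c" by (rule blk_cong) (rule le)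
  have s: "blk g c \<le> c" by (rule blk_props)
  have wc: "wcond n g (blk g c) = wcond n g' (blk g' c)"
    using wcond_cong[OF assms s] b by auto
  have hjeq: "hj n g c = hj n g' c"
  proof (cases "\<exists>b. wcond n g (blk g c) b")
    case True
    define b0 where "b0 = (LEAST b. wcond n g (blk g c) b)"
    have "wcond n g (blk g c) b0" unfolding b0_def using True by (metis LeastI)
    then have "b0 < c + 2^NN n" unfolding wcond_def using s by auto
    then show ?thesis unfolding hj_def using True wc assms b0_def by simp
  next
    case False
    moreover have F2: "\<not>(\<exists>b. wcond n g' (blk g' c) b)" using False wc by simp
    have "hj n g c = 0" unfolding hj_def using False by (intro if_not_P)
    moreover have "hj n g' c = 0" unfolding hj_def using F2 by (intro if_not_P)
    ultimately show ?thesis by simp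
  qed
  have hkeq: "hk g c = hk g' c"
  proof -
    have "(\<lambda>t. t \<le> c \<and> ist (g t)) = (\<lambda>t. t \<le> c \<and> ist (g' t))" using le by auto
    moreover have "(\<exists>t\<le>c. ist (g t)) = (\<exists>t\<le>c. ist (g' t))" using le by auto
    moreover have "(GREATEST t. t \<le> c \<and> ist (g t)) \<le> c" if "\<exists>t\<le>c. ist (g t)"
      using that GreatestI_nat[of "\<lambda>t. t \<le> c \<and> ist (g t)"] by blast
    ultimately show ?thesis unfolding hk_def using le by (metis (no_types, lifting))
  qed
  show ?thesis unfolding hout_def hjeq hkeq ..
qed

lemma sum_fh: "(\<Sum>i'\<le>c. fh n i') = 2^NN n + c"
  by (induction c) (auto simp: fh_def)

lemma outcome_h: "game_outcome (fh n) (tauh n) x c = (x c, hout n x c)"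
proof -
  have "tauh n (map x [0..<2^NN n + c]) = hout n (\<lambda>p. map x [0..<2^NN n + c] ! p) c"
    unfolding tauh_def by simp
  also have "\<dots> = hout n x c" by (rule hout_cong) simp
  finally show ?thesis unfolding game_outcome_def sum_fh by simp
qed

abbreviation Foo :: "fl \<Rightarrow> bool" where "Foo F \<equiv> fst F"
abbreviation Fos :: "fl \<Rightarrow> bool" where "Fos F \<equiv> fst (snd F)"
abbreviation Fit :: "fl \<Rightarrow> bool" where "Fit F \<equiv> fst (snd (snd F))"
abbreviation Flic :: "fl \<Rightarrow> bool" where "Flic F \<equiv> snd (snd (snd F))"

lemma fstep_comp:
  "Foo (fstep n F (i, v)) = (iy i = oj n v \<or> (iy i < oj n v \<and> \<not> inb i \<and> Foo F))"
  "Fos (fstep n F (i, v)) = ((\<not> inb i \<and> Fos F) \<or> (iy i = oj n v \<and> \<not> inb i \<and> Foo F))"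
  "Fit (fstep n F (i, v)) = (ist i \<or> (\<not> inb i \<and> Fit F \<and> iy i < ok n v))"
  "Flic (fstep n F (i, v)) = ((\<not> inb i \<and> Flic F) \<or> (\<not> ist i \<and> \<not> inb i \<and> Fit F \<and> iy i = ok n v))"
  by (cases F; auto simp: Let_def)+

lemma ffail_eq: "ffail n F (i, v) = ((ist i \<and> ok n v \<noteq> iy i) \<or> (inb i \<and> Flic F \<and> \<not> Fos F))"
  by (cases F) auto

lemma frun0: "Foo (frun n w 0) = False" "Fos (frun n w 0) = False" "Fit (frun n w 0) = False" "Flic (frun n w 0) = False"
  by auto

lemma hk_st: "ist (g c) \<Longrightarrow> hk g c = iy (g c)"
proof -
  assume h: "ist (g c)"
  have "(GREATEST t. t \<le> c \<and> ist (g t)) = c"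
    by (rule Greatest_equality) (use h in auto)
  then show ?thesis unfolding hk_def using h by auto
qed

lemma hk_Suc: "\<not> ist (g (Suc c)) \<Longrightarrow> hk g (Suc c) = hk g c"
proof -
  assume h: "\<not> ist (g (Suc c))"
  have e1: "(\<exists>t\<le>Suc c. ist (g t)) = (\<exists>t\<le>c. ist (g t))" using h le_Suc_eq by auto
  have e2: "(\<lambda>t. t \<le> Suc c \<and> ist (g t)) = (\<lambda>t. t \<le> c \<and> ist (g t))" using h le_Suc_eq by auto
  show ?thesis unfolding hk_def e1 e2 ..
qed

lemma hj_blk: "blk g d = blk g c \<Longrightarrow> hj n g d = hj n g c"
proof -
  assume h: "blk g d = blk g c"
  show ?thesis unfolding hj_def h by (rule refl)
qed

lemma hj_lt: "(\<And>p. g p < 4 * NN n) \<Longrightarrow> hj n g c < NN n"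
  unfolding hj_def iy_def using NN_def by (auto simp: less_mult_imp_div_less mult.commute)

lemma hk_lt: "(\<And>p. g p < 4 * NN n) \<Longrightarrow> hk g c < NN n"
  unfolding hk_def iy_def using NN_def by (auto simp: less_mult_imp_div_less mult.commute)

lemma hout_dec:
  assumes "\<And>p. g p < 4 * NN n"
  shows "oj n (hout n g c) = hj n g c" "ok n (hout n g c) = hk g c" "hout n g c < NN n * NN n"
proof -
  have k: "hk g c < NN n" by (rule hk_lt[OF assms])
  have j: "hj n g c < NN n" by (rule hj_lt[OF assms])
  show "oj n (hout n g c) = hj n g c" unfolding oj_def hout_def using k by simp
  show "ok n (hout n g c) = hk g c" unfolding ok_def hout_def using k by simp
  have "hj n g c * NN n + hk g c < hj n g c * NN n + NN n" using k by simp
  also have "\<dots> = (hj n g c + 1) * NN n" by simp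
  also have "\<dots> \<le> NN n * NN n"
  proof -
    have "hj n g c + 1 \<le> NN n" using j by simp
    then show ?thesis by (rule mult_le_mono1)
  qed
  finally show "hout n g c < NN n * NN n" unfolding hout_def .
qed

lemma I12:
  assumes xr: "\<And>p. x p < 4 * NN n"
  defines "w \<equiv> \<lambda>c. (x c, hout n x c)"
  shows "(Fit (frun n w (Suc c)) \<longrightarrow> (\<exists>a. blk x c \<le> a \<and> a \<le> c \<and> iy (x a) = hk x c \<and>
            (\<forall>d. a < d \<and> d \<le> c \<longrightarrow> iy (x d) < hk x c))) \<and>
         (Flic (frun n w (Suc c)) \<longrightarrow> (\<exists>a b. blk x c \<le> a \<and> b \<le> c \<and> badp (\<lambda>p. iy (x p)) a b))"
proof (induction c)
  case 0
  have fr: "frun n w (Suc 0) = fstep n (frun n w 0) (x 0, hout n x 0)" by (simp add: w_def)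
  have b0: "blk x 0 = 0" using blk_props(1)[of x 0] by simp
  show ?case unfolding fr fstep_comp hout_dec[OF xr] using frun0 b0 hk_st[of x 0] by auto
next
  case (Suc c)
  have fr: "frun n w (Suc (Suc c)) = fstep n (frun n w (Suc c)) (x (Suc c), hout n x (Suc c))"
    by (simp add: w_def)
  show ?case
  proof (cases "inb (x (Suc c))")
    case True
    then have b: "blk x (Suc c) = Suc c" by (simp add: blk_inb)
    show ?thesis unfolding fr fstep_comp hout_dec[OF xr] using True b hk_st[of x "Suc c"] by auto
  next
    case False
    have b: "blk x (Suc c) = blk x c" by (rule blk_Suc) (use False in simp)
    have part1: "Fit (frun n w (Suc (Suc c))) \<longrightarrow> (\<exists>a. blk x (Suc c) \<le> a \<and> a \<le> Suc c \<and> iy (x a) = hk x (Suc c) \<and>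
            (\<forall>d. a < d \<and> d \<le> Suc c \<longrightarrow> iy (x d) < hk x (Suc c)))"
    proof
      assume h: "Fit (frun n w (Suc (Suc c)))"
      show "\<exists>a. blk x (Suc c) \<le> a \<and> a \<le> Suc c \<and> iy (x a) = hk x (Suc c) \<and>
            (\<forall>d. a < d \<and> d \<le> Suc c \<longrightarrow> iy (x d) < hk x (Suc c))"
      proof (cases "ist (x (Suc c))")
        case True
        then show ?thesis using hk_st[of x "Suc c"] blk_props(1)[of x "Suc c"] by (intro exI[of _ "Suc c"]) auto
      next
        case nst: False
        have hk: "hk x (Suc c) = hk x c" by (rule hk_Suc) (use nst in simp)
        have "Fit (frun n w (Suc c)) \<and> iy (x (Suc c)) < hk x c"
          using h nst False unfolding fr fstep_comp hout_dec[OF xr] hk by auto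
        then obtain a where a: "blk x c \<le> a" "a \<le> c" "iy (x a) = hk x c"
            "\<forall>d. a < d \<and> d \<le> c \<longrightarrow> iy (x d) < hk x c" using Suc.IH by blast
        show ?thesis
          by (rule exI[of _ a]) (use a hk b \<open>Fit (frun n w (Suc c)) \<and> iy (x (Suc c)) < hk x c\<close> le_Suc_eq in auto)
      qed
    qed
    have part2: "Flic (frun n w (Suc (Suc c))) \<longrightarrow> (\<exists>a b. blk x (Suc c) \<le> a \<and> b \<le> Suc c \<and> badp (\<lambda>p. iy (x p)) a b)"
    proof
      assume h: "Flic (frun n w (Suc (Suc c)))"
      then consider "Flic (frun n w (Suc c))"
        | "\<not> ist (x (Suc c)) \<and> Fit (frun n w (Suc c)) \<and> iy (x (Suc c)) = hk x (Suc c)"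
        using False unfolding fr fstep_comp hout_dec[OF xr] by auto
      then show "\<exists>a b. blk x (Suc c) \<le> a \<and> b \<le> Suc c \<and> badp (\<lambda>p. iy (x p)) a b"
      proof cases
        case 1
        then obtain a bb where "blk x c \<le> a" "bb \<le> c" "badp (\<lambda>p. iy (x p)) a bb" using Suc.IH by blast
        then show ?thesis using b by (intro exI[of _ a] exI[of _ bb]) auto
      next
        case 2
        have hk: "hk x (Suc c) = hk x c" by (rule hk_Suc) (use 2 in simp)
        obtain a where a: "blk x c \<le> a" "a \<le> c" "iy (x a) = hk x c"
            "\<forall>d. a < d \<and> d \<le> c \<longrightarrow> iy (x d) < hk x c" using Suc.IH 2 by blast
        have "badp (\<lambda>p. iy (x p)) a (Suc c)" unfolding badp_def using a 2 hk
          by (auto simp: less_Suc_eq_le)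
        then show ?thesis using a b by auto
      qed
    qed
    show ?thesis using part1 part2 by blast
  qed
qed

lemma I3:
  assumes xr: "\<And>p. x p < 4 * NN n"
  defines "w \<equiv> \<lambda>c. (x c, hout n x c)"
  assumes ex: "\<exists>a b. blk x c \<le> a \<and> b \<le> c \<and> badp (\<lambda>p. iy (x p)) a b"
  shows "Fos (frun n w (Suc c))"
proof -
  define s where "s = blk x c"
  define y where "y = (\<lambda>p. iy (x p))"
  have noinb: "\<And>t. s < t \<Longrightarrow> t \<le> c \<Longrightarrow> \<not> inb (x t)" unfolding s_def by (rule blk_noinb)
  have yN: "\<And>p. y p < NN n" unfolding y_def iy_def using xr by (simp add: less_mult_imp_div_less mult.commute)
  have wit: "\<exists>b'. b' \<le> c \<and> wcond n x s b'"
  proof (cases "c < s + 2^NN n")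
    case True
    obtain a b where ab: "s \<le> a" "b \<le> c" "badp y a b" using ex unfolding s_def y_def by blast
    have "wcond n x s b" unfolding wcond_def using ab True noinb unfolding y_def by auto
    then show ?thesis using ab by blast
  next
    case False
    obtain a b where ab: "s \<le> a" "b < s + 2^NN n" "badp y a b"
      using bad_exists[of "NN n" "2^NN n" s y] yN by auto
    have "wcond n x s b" unfolding wcond_def using ab False noinb unfolding y_def by auto
    moreover have "b \<le> c" using ab(2) False by linarith
    ultimately show ?thesis by blast
  qed
  define hb where "hb = (LEAST b. wcond n x s b)"
  have whb: "wcond n x s hb" unfolding hb_def using wit by (metis LeastI)
  have hbc: "hb \<le> c" using wit unfolding hb_def by (metis Least_le le_trans)
  obtain a0 where a0: "s \<le> a0" "badp y a0 hb" using whb unfolding wcond_def y_def by blast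
  have J: "\<And>d. s \<le> d \<Longrightarrow> d \<le> c \<Longrightarrow> hj n x d = y hb"
  proof -
    fix d assume d: "s \<le> d" "d \<le> c"
    have "blk x d = s" using blk_same[of x c d] d unfolding s_def by simp
    then show "hj n x d = y hb" unfolding hj_def hb_def y_def using wit by auto
  qed
  have trk: "\<And>d. a0 \<le> d \<Longrightarrow> d \<le> c \<Longrightarrow> (d < hb \<longrightarrow> Foo (frun n w (Suc d))) \<and> (hb \<le> d \<longrightarrow> Fos (frun n w (Suc d)))"
  proof -
    fix d show "a0 \<le> d \<Longrightarrow> d \<le> c \<Longrightarrow> (d < hb \<longrightarrow> Foo (frun n w (Suc d))) \<and> (hb \<le> d \<longrightarrow> Fos (frun n w (Suc d)))"
    proof (induction d)
      case 0
      then have "a0 = 0" by simp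
      moreover have "y a0 = y hb" "a0 < hb" using a0(2) unfolding badp_def by auto
      moreover have "hj n x 0 = y hb" using J[of 0] 0 a0 by simp
      ultimately show ?case by (simp add: w_def fstep_comp hout_dec[OF xr] y_def)
    next
      case (Suc d)
      have fr: "frun n w (Suc (Suc d)) = fstep n (frun n w (Suc d)) (x (Suc d), hout n x (Suc d))"
        by (simp add: w_def)
      have Jd: "hj n x (Suc d) = y hb" using J[of "Suc d"] Suc.prems a0 by simp
      show ?case
      proof (cases "a0 = Suc d")
        case True
        moreover have "y a0 = y hb" "a0 < hb" using a0(2) unfolding badp_def by auto
        ultimately show ?thesis unfolding fr fstep_comp hout_dec[OF xr] Jd by (simp add: y_def)
      next
        case False
        then have ad: "a0 \<le> d" using Suc.prems by simp
        have IH: "(d < hb \<longrightarrow> Foo (frun n w (Suc d))) \<and> (hb \<le> d \<longrightarrow> Fos (frun n w (Suc d)))"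
          using Suc.IH ad Suc.prems by simp
        have ni: "\<not> inb (x (Suc d))" using noinb[of "Suc d"] a0(1) ad Suc.prems by simp
        consider "Suc d < hb" | "Suc d = hb" | "hb < Suc d" by linarith
        then show ?thesis
        proof cases
          case 1
          have "y (Suc d) < y a0" using a0(2) 1 ad unfolding badp_def by auto
          moreover have "y a0 = y hb" using a0(2) unfolding badp_def by auto
          ultimately show ?thesis using 1 IH ni unfolding fr fstep_comp hout_dec[OF xr] Jd
            by (simp add: y_def)
        next
          case 2
          then show ?thesis using IH ni unfolding fr fstep_comp hout_dec[OF xr] Jd
            by (simp add: y_def)
        next
          case 3
          then show ?thesis using IH ni unfolding fr fstep_comp hout_dec[OF xr] Jd
            by (simp add: y_def)
        qed
      qed
    qed
  qed
  have "a0 \<le> hb" using a0(2) unfolding badp_def by simp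
  then show ?thesis using trk[of c] hbc by simp
qed

lemma honest_nofail:
  assumes xr: "\<And>p. x p < 4 * NN n"
  shows "\<not> failed n (\<lambda>c. (x c, hout n x c)) c"
proof -
  define w where "w = (\<lambda>c. (x c, hout n x c))"
  have "\<not> ffail n (frun n w d) (w d)" for d
  proof (cases d)
    case 0
    then show ?thesis using hk_st[of x 0] by (simp add: w_def ffail_eq hout_dec[OF xr])
  next
    case (Suc d')
    have "Flic (frun n w (Suc d')) \<longrightarrow> Fos (frun n w (Suc d'))"
      using I12[where x=x and n=n and c=d', OF xr] I3[where x=x and n=n and c=d', OF xr] unfolding w_def by blast
    then show ?thesis using hk_st[of x d] Suc by (auto simp: w_def ffail_eq hout_dec[OF xr])
  qed
  then show ?thesis unfolding failed_def w_def by blast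
qed

lemma bdiff_refl: "\<not> bdiff n a a" unfolding bdiff_def by simp

lemma honest_nospike:
  assumes xr: "\<And>p. x p < 4 * NN n"
  shows "\<not> spike n (\<lambda>c. (x c, hout n x c)) c"
proof -
  have 1: "\<not> inb (x (Suc c)) \<Longrightarrow> hj n x (Suc c) = hj n x c" using blk_Suc hj_blk by metis
  have 2: "\<not> ist (x (Suc c)) \<Longrightarrow> hk x (Suc c) = hk x c" by (rule hk_Suc)
  show ?thesis unfolding spike_def fst_conv snd_conv hout_dec[OF xr] using 1 2 bdiff_refl by metis
qed



definition Lk :: "(nat \<Rightarrow> nat) \<Rightarrow> nat \<Rightarrow> nat" where
  "Lk f i = (\<Sum>i'\<le>i. (f i' - 1))"

primrec bsq :: "(nat \<Rightarrow> nat) \<Rightarrow> nat \<Rightarrow> nat" where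
  "bsq f 0 = 0"
| "bsq f (Suc m) = bsq f m + Lk f (bsq f m) + 3"

definition bi :: "(nat \<Rightarrow> nat) \<Rightarrow> nat \<Rightarrow> nat" where
  "bi f p = (GREATEST m. bsq f m \<le> p)"

definition zc :: "nat \<Rightarrow> nat" where "zc J = (if J = 0 then 1 else 0)"

definition adv :: "nat \<Rightarrow> (nat \<Rightarrow> nat) \<Rightarrow> (nat list \<Rightarrow> nat) \<Rightarrow> nat list \<Rightarrow> nat \<Rightarrow> nat" where
  "adv n f tau pre p = (let s = bsq f (bi f p); L = Lk f s; r = p - s in
    if r \<le> L then 4 * tz (Suc r) + (if r = 0 then 1 else 0)
    else 4 * zc (oj n (tau (take (s + L + 1) pre))) + (if r = L + 1 then 2 else 0))"

primrec axs :: "nat \<Rightarrow> (nat \<Rightarrow> nat) \<Rightarrow> (nat list \<Rightarrow> nat) \<Rightarrow> nat \<Rightarrow> nat list" where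
  "axs n f tau 0 = []"
| "axs n f tau (Suc p) = axs n f tau p @ [adv n f tau (axs n f tau p) p]"

definition xa :: "nat \<Rightarrow> (nat \<Rightarrow> nat) \<Rightarrow> (nat list \<Rightarrow> nat) \<Rightarrow> nat \<Rightarrow> nat" where
  "xa n f tau p = adv n f tau (axs n f tau p) p"

lemma axs_map: "axs n f tau p = map (xa n f tau) [0..<p]"
  by (induction p) (auto simp: xa_def)

lemma bsq_ge: "m \<le> bsq f m"
  by (induction m) auto

lemma bsq_mono: "m \<le> m' \<Longrightarrow> bsq f m \<le> bsq f m'"
  by (induction m' ) (auto simp: le_Suc_eq)

lemma bsq_smono: "m < m' \<Longrightarrow> bsq f m < bsq f m'"
proof -
  assume "m < m'"
  then have "Suc m \<le> m'" by simp
  then have "bsq f (Suc m) \<le> bsq f m'" by (rule bsq_mono)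
  then show ?thesis by simp
qed

lemma bi_props: "bsq f (bi f p) \<le> p" "p < bsq f (Suc (bi f p))"
proof -
  have ex: "bsq f 0 \<le> p" by simp
  have bnd: "\<And>m. bsq f m \<le> p \<Longrightarrow> m \<le> p" using bsq_ge le_trans by blast
  show "bsq f (bi f p) \<le> p" unfolding bi_def by (rule GreatestI_nat[of _ 0 p]) (use bnd in auto)
  show "p < bsq f (Suc (bi f p))"
  proof (rule ccontr)
    assume "\<not> ?thesis"
    then have "Suc (bi f p) \<le> bi f p" unfolding bi_def
      by (intro Greatest_le_nat[of _ _ p]) (use bnd bi_def in auto)
    then show False by simp
  qed
qed

lemma bi_eq: "bsq f m \<le> p \<Longrightarrow> p < bsq f (Suc m) \<Longrightarrow> bi f p = m"
proof -
  assume a: "bsq f m \<le> p" "p < bsq f (Suc m)"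
  have "\<not> bi f p < m"
  proof
    assume "bi f p < m"
    then have "bsq f (Suc (bi f p)) \<le> bsq f m" by (intro bsq_mono) simp
    then show False using bi_props(2)[of p f] a by simp
  qed
  moreover have "\<not> m < bi f p"
  proof
    assume "m < bi f p"
    then have "bsq f (Suc m) \<le> bsq f (bi f p)" by (intro bsq_mono) simp
    then show False using bi_props(1)[of f p] a by simp
  qed
  ultimately show ?thesis by simp
qed

lemma sum_f: "(\<And>i. f i \<noteq> 0) \<Longrightarrow> (\<Sum>i'\<le>c. f i') = Suc c + Lk f c"
proof (induction c)
  case 0 then show ?case by (simp add: Lk_def)
next
  case (Suc c)
  have "f (Suc c) \<noteq> 0" by (rule Suc.prems)
  then show ?case using Suc by (simp add: Lk_def)
qed

lemma bitv_eq:
  assumes "a < 2^BB n" "b < 2^BB n" "\<not> bdiff n a b"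
  shows "a = b"
proof (rule bit_eqI)
  fix i
  show "bit a i = bit b i"
  proof (cases "i < BB n")
    case True
    then show ?thesis using assms(3) unfolding bdiff_def bitv_def by (simp add: bit_iff_odd)
  next
    case False
    then have le: "(2::nat)^BB n \<le> 2^i" by simp
    have "a < 2^i" "b < 2^i" using assms(1,2) le by linarith+
    then have "a div 2^i = 0" "b div 2^i = 0" by simp_all
    then show ?thesis by (simp add: bit_iff_odd)
  qed
qed

lemma NN_lt: "NN n < 2^BB n"
proof -
  have "n < 2^n" by (rule less_exp)
  then show ?thesis by (simp add: NN_def BB_def)
qed

lemma NN_ge2: "n \<ge> 1 \<Longrightarrow> 2 \<le> NN n"
proof -
  assume "n \<ge> 1"
  moreover have "(1::nat) \<le> 2^n" by simp
  ultimately show ?thesis unfolding NN_def by linarith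
qed

lemma M_bound: "n * (2 ^ (2 ^ n) - 1) < 2 ^ NN n"
proof -
  have a: "n \<le> 2^n" using less_exp[of n] by simp
  have "n * (2 ^ (2 ^ n) - 1) \<le> n * 2 ^ (2 ^ n)" by simp
  also have "\<dots> \<le> 2^n * 2^(2^n)" using a by (rule mult_le_mono1)
  also have "\<dots> = 2 ^ NN n" by (simp add: NN_def power_add)
  finally have le: "n * (2 ^ (2 ^ n) - 1) \<le> 2 ^ NN n" .
  show ?thesis
  proof (cases "n = 0")
    case True then show ?thesis by simp
  next
    case False
    have "(1::nat) \<le> 2 ^ (2 ^ n)" by simp
    then have "n * (2 ^ (2 ^ n) - 1) < n * 2 ^ (2 ^ n)" using False by simp
    also have "\<dots> \<le> 2 ^ NN n" using a by (simp add: NN_def power_add mult_le_mono1)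
    finally show ?thesis .
  qed
qed

lemma dec4: "iy (4 * t + e) = t" if "e < 4" for t e
  using that unfolding iy_def by simp

lemma flags4: "inb (4 * t + 1)" "\<not> inb (4 * t)" "\<not> inb (4 * t + 2)"
  "ist (4 * t + 2)" "\<not> ist (4 * t)" "\<not> ist (4 * t + 1)"
  unfolding inb_def ist_def by simp_all

context
  fixes n :: nat and f :: "nat \<Rightarrow> nat" and tau :: "nat list \<Rightarrow> nat"
  assumes n1: "n \<ge> 1" and df: "\<And>i. f i \<noteq> 0" and ng: "\<And>i. Lk f i < n * (2 ^ (2 ^ n) - 1)"
begin

abbreviation X where "X \<equiv> xa n f tau"
abbreviation W where "W \<equiv> game_outcome f tau X"

lemma W_fst: "fst (W c) = X c" by (simp add: game_outcome_def)
lemma W_snd: "snd (W c) = tau (map X [0..<Suc c + Lk f c])"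
  by (simp add: game_outcome_def sum_f[OF df])

lemma L_lt: "Suc (Lk f i) < 2 ^ NN n"
  using ng[of i] M_bound[of n] by linarith

lemma X_ruler: assumes "r \<le> Lk f (bsq f m)"
  shows "X (bsq f m + r) = 4 * tz (Suc r) + (if r = 0 then 1 else 0)"
proof -
  have "bi f (bsq f m + r) = m" by (rule bi_eq) (use assms in auto)
  then show ?thesis using assms unfolding xa_def adv_def by (simp add: Let_def)
qed

lemma X_z: assumes "r = Lk f (bsq f m) + 1 \<or> r = Lk f (bsq f m) + 2"
  shows "X (bsq f m + r) = 4 * zc (oj n (snd (W (bsq f m)))) + (if r = Lk f (bsq f m) + 1 then 2 else 0)"
proof -
  define s where "s = bsq f m"
  define L where "L = Lk f s"
  have b: "bi f (s + r) = m" unfolding s_def by (rule bi_eq) (use assms in auto)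
  have rL: "\<not> r \<le> L" "r = L + 1 \<or> r = L + 2" using assms unfolding L_def s_def by auto
  have 1: "X (s + r) = adv n f tau (axs n f tau (s + r)) (s + r)" by (simp add: xa_def)
  have 2: "adv n f tau (axs n f tau (s + r)) (s + r) =
      4 * zc (oj n (tau (take (s + L + 1) (axs n f tau (s + r))))) + (if r = L + 1 then 2 else 0)"
    unfolding adv_def Let_def b s_def[symmetric] L_def[symmetric] using rL by simp
  have tk: "take (s + L + 1) (axs n f tau (s + r)) = map X [0..<Suc s + L]"
    unfolding axs_map using rL by (auto simp: take_map)
  have 3: "snd (W s) = tau (map X [0..<Suc s + L])" unfolding W_snd L_def ..
  show ?thesis unfolding s_def[symmetric] L_def[symmetric] 1 2 tk 3 ..
qed

lemma X_range: "X p < 4 * NN n"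
proof -
  define m where "m = bi f p"
  define s where "s = bsq f m"
  define L where "L = Lk f s"
  have p1: "s \<le> p" "p < s + L + 3" using bi_props[where f=f and p=p] unfolding m_def s_def L_def by auto
  define r where "r = p - s"
  have pr: "p = s + r" using p1 unfolding r_def by simp
  consider "r \<le> L" | "r = L + 1 \<or> r = L + 2" using p1 pr by linarith
  then show ?thesis
  proof cases
    case 1
    have "tz (Suc r) < NN n" using L_lt[of s] 1 unfolding L_def by (intro tz_lt) auto
    then show ?thesis unfolding pr s_def using X_ruler[of r m] 1 unfolding L_def s_def by auto
  next
    case 2
    have "zc (oj n (snd (W (bsq f m)))) \<le> 1" by (simp add: zc_def)
    moreover have "2 \<le> NN n" using NN_ge2 n1 by simp
    ultimately show ?thesis unfolding pr s_def using X_z[of r m] 2 unfolding L_def s_def by auto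
  qed
qed

lemma frun_W: "frun n W (Suc c) = fstep n (frun n W c) (X c, snd (W c))"
proof -
  have "W c = (X c, snd (W c))" using W_fst[of c] by (metis prod.collapse)
  then show ?thesis by (metis frun.simps(2))
qed

lemma ruler_block: assumes "s = bsq f m" "s \<le> a" "c \<le> s + Lk f s" "badp (\<lambda>p. iy (X p)) a c"
  shows False
proof -
  have iyr: "\<And>t. t \<le> Lk f s \<Longrightarrow> iy (X (s + t)) = tz (Suc t)"
    using X_ruler dec4 assms(1) by simp
  have ac: "a < c" "iy (X a) = iy (X c)" "\<And>d. a < d \<Longrightarrow> d < c \<Longrightarrow> iy (X d) < iy (X a)"
    using assms(4) unfolding badp_def by auto
  have "badp (\<lambda>r. tz (Suc r)) (a - s) (c - s)"
    unfolding badp_def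
  proof (intro conjI allI impI)
    show "a - s < c - s" using ac assms by simp
    have "tz (Suc (a - s)) = iy (X a)" using iyr[of "a - s"] assms ac by simp
    moreover have "tz (Suc (c - s)) = iy (X c)" using iyr[of "c - s"] assms ac by simp
    ultimately show e: "tz (Suc (a - s)) = tz (Suc (c - s))" using ac by simp
    fix d assume d: "a - s < d \<and> d < c - s"
    have dL: "d \<le> Lk f s" using d assms(3) by linarith
    have "tz (Suc d) = iy (X (s + d))" using iyr[OF dL] by simp
    have "a < s + d" "s + d < c" using d assms(2) by linarith+
    then have "iy (X (s + d)) < iy (X a)" using ac(3) by blast
    also have "iy (X a) = tz (Suc (a - s))" using iyr[of "a - s"] assms ac by simp
    finally show "tz (Suc d) < tz (Suc (a - s))" using \<open>tz (Suc d) = iy (X (s + d))\<close> by simp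
  qed
  then show False using ruler_nobad by blast
qed

lemma block_fail:
  assumes so: "\<And>c. snd (W c) < NN n * NN n"
  and nsp: "\<And>c. bsq f m \<le> c \<Longrightarrow> c \<le> bsq f m + Lk f (bsq f m) + 1 \<Longrightarrow> \<not> spike n W c"
  shows "failed n W (Suc (bsq f (Suc m)))"
proof -
  define s where "s = bsq f m"
  define L where "L = Lk f s"
  define J where "J = oj n (snd (W s))"
  define z where "z = zc J"
  have zJ: "z \<noteq> J" unfolding z_def zc_def by simp
  have N0: "NN n > 0" using NN_ge2[OF n1] by simp
  have jlt: "\<And>c. oj n (snd (W c)) < 2 ^ BB n"
  proof -
    fix c have "oj n (snd (W c)) < NN n" using so[of c] N0 unfolding oj_def by (simp add: less_mult_imp_div_less)
    then show "oj n (snd (W c)) < 2 ^ BB n" using NN_lt[of n] by simp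
  qed
  have klt: "\<And>c. ok n (snd (W c)) < 2 ^ BB n"
  proof -
    fix c have "ok n (snd (W c)) < NN n" using N0 unfolding ok_def by simp
    then show "ok n (snd (W c)) < 2 ^ BB n" using NN_lt[of n] by simp
  qed
  have Xr: "\<And>r. r \<le> L \<Longrightarrow> X (s + r) = 4 * tz (Suc r) + (if r = 0 then 1 else 0)"
    unfolding s_def L_def by (rule X_ruler) (simp add: s_def L_def)
  have X1: "X (s + L + 1) = 4 * z + 2"
    using X_z[of "L + 1" m] unfolding s_def[symmetric] L_def[symmetric] J_def[symmetric] z_def[symmetric]
    by (simp add: L_def s_def add.assoc)
  have X2: "X (s + L + 2) = 4 * z"
    using X_z[of "L + 2" m] unfolding s_def[symmetric] L_def[symmetric] J_def[symmetric] z_def[symmetric]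
    by (simp add: L_def s_def add.assoc)
  have ninb: "\<And>r. 1 \<le> r \<Longrightarrow> r \<le> L + 2 \<Longrightarrow> \<not> inb (X (s + r))"
  proof -
    fix r assume r: "1 \<le> r" "r \<le> L + 2"
    consider "r \<le> L" | "r = L + 1" | "r = L + 2" using r by linarith
    then show "\<not> inb (X (s + r))"
    proof cases
      case 1 then show ?thesis using Xr[of r] r flags4 by simp
    next
      case 2 then show ?thesis using X1 flags4 by (simp add: add.assoc)
    next
      case 3 then show ?thesis using X2 flags4 by (simp add: add.assoc)
    qed
  qed
  have Jc: "\<And>r. r \<le> L + 2 \<Longrightarrow> oj n (snd (W (s + r))) = J"
  proof -
    fix r show "r \<le> L + 2 \<Longrightarrow> oj n (snd (W (s + r))) = J"
    proof (induction r)
      case 0 then show ?case by (simp add: J_def)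
    next
      case (Suc r)
      have ns: "\<not> spike n W (s + r)" using nsp[of "s + r"] Suc.prems unfolding s_def L_def by simp
      have ni: "\<not> inb (fst (W (Suc (s + r))))" using ninb[of "Suc r"] Suc.prems W_fst by simp
      have "\<not> bdiff n (oj n (snd (W (s + r)))) (oj n (snd (W (Suc (s + r)))))"
        using ns ni unfolding spike_def by blast
      then have "oj n (snd (W (s + r))) = oj n (snd (W (Suc (s + r))))"
        using bitv_eq jlt by blast
      then show ?case using Suc by simp
    qed
  qed
  have Keq: "ok n (snd (W (s + L + 2))) = ok n (snd (W (s + L + 1)))"
  proof -
    have ns: "\<not> spike n W (s + L + 1)" using nsp[of "s + L + 1"] unfolding s_def L_def by simp
    have ni: "\<not> ist (fst (W (Suc (s + L + 1))))" using X2 W_fst flags4 by (simp add: add.assoc)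
    have "\<not> bdiff n (ok n (snd (W (s + L + 1)))) (ok n (snd (W (Suc (s + L + 1)))))"
      using ns ni unfolding spike_def by blast
    then have "ok n (snd (W (s + L + 1))) = ok n (snd (W (Suc (s + L + 1))))" using bitv_eq klt by blast
    moreover have "Suc (s + L + 1) = s + L + 2" by simp
    ultimately show ?thesis by simp
  qed
  define F where "F = frun n W"
  have Fs: "\<And>c. F (Suc c) = fstep n (F c) (X c, snd (W c))" unfolding F_def by (rule frun_W)
  have Oinv: "\<And>r. r \<le> L \<Longrightarrow> (Foo (F (Suc (s + r))) \<longrightarrow> (\<exists>a. s \<le> a \<and> a \<le> s + r \<and> iy (X a) = J \<and>
      (\<forall>d. a < d \<and> d \<le> s + r \<longrightarrow> iy (X d) < J))) \<and> \<not> Fos (F (Suc (s + r)))"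
  proof -
    fix r show "r \<le> L \<Longrightarrow> (Foo (F (Suc (s + r))) \<longrightarrow> (\<exists>a. s \<le> a \<and> a \<le> s + r \<and> iy (X a) = J \<and>
      (\<forall>d. a < d \<and> d \<le> s + r \<longrightarrow> iy (X d) < J))) \<and> \<not> Fos (F (Suc (s + r)))"
    proof (induction r)
      case 0
      have ib: "inb (X s)" using Xr[of 0] flags4 by simp
      have j0: "oj n (snd (W s)) = J" by (simp add: J_def)
      show ?case unfolding Fs using ib j0 by (auto simp: fstep_comp)
    next
      case (Suc r)
      define c where "c = s + Suc r"
      have ni: "\<not> inb (X c)" using ninb[of "Suc r"] Suc.prems unfolding c_def by simp
      have jc: "oj n (snd (W c)) = J" using Jc[of "Suc r"] Suc.prems unfolding c_def by simp
      have IH: "(Foo (F (Suc (s + r))) \<longrightarrow> (\<exists>a. s \<le> a \<and> a \<le> s + r \<and> iy (X a) = J \<and>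
      (\<forall>d. a < d \<and> d \<le> s + r \<longrightarrow> iy (X d) < J))) \<and> \<not> Fos (F (Suc (s + r)))"
        using Suc by simp
      have cc: "Suc (s + r) = c" unfolding c_def by simp
      have nos: "\<not> (iy (X c) = J \<and> Foo (F c))"
      proof
        assume h: "iy (X c) = J \<and> Foo (F c)"
        then obtain a where a: "s \<le> a" "a \<le> s + r" "iy (X a) = J" "\<forall>d. a < d \<and> d \<le> s + r \<longrightarrow> iy (X d) < J"
          using IH cc by auto
        have "badp (\<lambda>p. iy (X p)) a c" unfolding badp_def using a h unfolding c_def
          by (auto simp: less_Suc_eq_le)
        then show False using ruler_block[of s m a c] a Suc.prems unfolding c_def s_def L_def by auto
      qed
      have p1: "\<not> Fos (F (Suc c))" unfolding Fs fstep_comp using nos IH cc ni jc by auto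
      have p2: "Foo (F (Suc c)) \<longrightarrow> (\<exists>a. s \<le> a \<and> a \<le> c \<and> iy (X a) = J \<and>
          (\<forall>d. a < d \<and> d \<le> c \<longrightarrow> iy (X d) < J))"
      proof
        assume "Foo (F (Suc c))"
        then have "iy (X c) = J \<or> (iy (X c) < J \<and> Foo (F c))" unfolding Fs fstep_comp using jc ni by auto
        then show "\<exists>a. s \<le> a \<and> a \<le> c \<and> iy (X a) = J \<and> (\<forall>d. a < d \<and> d \<le> c \<longrightarrow> iy (X d) < J)"
        proof
          assume "iy (X c) = J"
          then show ?thesis using c_def by (intro exI[of _ c]) auto
        next
          assume h: "iy (X c) < J \<and> Foo (F c)"
          then obtain a where a: "s \<le> a" "a \<le> s + r" "iy (X a) = J" "\<forall>d. a < d \<and> d \<le> s + r \<longrightarrow> iy (X d) < J"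
            using IH cc by auto
          show ?thesis using a h unfolding c_def by (intro exI[of _ a]) (auto simp: le_Suc_eq)
        qed
      qed
      show ?case using p1 p2 unfolding c_def by simp
    qed
  qed
  define c1 where "c1 = s + L + 1"
  define c2 where "c2 = s + L + 2"
  have c12: "c2 = Suc c1" unfolding c1_def c2_def by simp
  have iy1: "iy (X c1) = z" using X1 dec4[of 2 z] unfolding c1_def by simp
  have iy2: "iy (X c2) = z" using X2 dec4[of 0 z] unfolding c2_def by simp
  have ni1: "\<not> inb (X c1)" "ist (X c1)" using X1 flags4 unfolding c1_def by simp_all
  have ni2: "\<not> inb (X c2)" "\<not> ist (X c2)" using X2 flags4 unfolding c2_def by simp_all
  have j1: "oj n (snd (W c1)) = J" using Jc[of "L + 1"] unfolding c1_def by (simp add: add.assoc)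
  have j2: "oj n (snd (W c2)) = J" using Jc[of "L + 2"] unfolding c2_def by (simp add: add.assoc)
  have os0: "\<not> Fos (F c1)" using Oinv[of L] unfolding c1_def by simp
  have os1: "\<not> Fos (F (Suc c1))" unfolding Fs fstep_comp using os0 iy1 zJ ni1 j1 by auto
  have os2: "\<not> Fos (F (Suc c2))" unfolding Fs fstep_comp using os1 c12 iy2 zJ ni2 j2 by auto
  have sS: "bsq f (Suc m) = Suc c2" unfolding c2_def s_def L_def by simp
  show ?thesis
  proof (cases "ffail n (F c1) (W c1)")
    case True
    then have "failed n W (Suc c1)" unfolding failed_def F_def by auto
    moreover have "Suc c1 \<le> Suc (bsq f (Suc m))" using sS c12 by simp
    ultimately show ?thesis by (rule failed_mono)
  next
    case False
    define v1 where "v1 = snd (W c1)"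
    have Wc1: "W c1 = (X c1, v1)" using W_fst[of c1] unfolding v1_def by (metis prod.collapse)
    have k1: "ok n (snd (W c1)) = z" using False ni1 iy1 unfolding Wc1 ffail_eq v1_def[symmetric] by auto
    have it1: "Fit (F (Suc c1))" unfolding Fs fstep_comp using ni1 by simp
    have k2: "ok n (snd (W c2)) = z" using Keq k1 unfolding c1_def c2_def by simp
    have lic2: "Flic (F (Suc c2))" unfolding Fs fstep_comp using it1 c12 ni2 iy2 k2 by simp
    have "X (bsq f (Suc m)) = 4 * tz (Suc 0) + 1" using X_ruler[of 0 "Suc m"] by simp
    then have ib: "inb (X (Suc c2))" using flags4(1) sS by metis
    define v2 where "v2 = snd (W (Suc c2))"
    have Ws: "W (Suc c2) = (X (Suc c2), v2)" using W_fst[of "Suc c2"] unfolding v2_def by (metis prod.collapse)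
    have "ffail n (F (Suc c2)) (W (Suc c2))" unfolding Ws ffail_eq using ib lic2 os2 by simp
    then have "failed n W (Suc (Suc c2))" unfolding failed_def F_def by auto
    then show ?thesis unfolding sS .
  qed
qed

lemma adv_main:
  assumes win: "winning_strategy {..<4 * NN n} f (sc_lang (Aut n)) tau"
    and cost: "strategy_cost (Aut n) {..<4 * NN n} f tau = enat n"
  shows False
proof -
  have inO: "W \<in> game_outcomes {..<4 * NN n} f tau"
    unfolding game_outcomes_def using X_range by auto
  then have inL: "W \<in> sc_lang (Aut n)" using win unfolding winning_strategy_def by blast
  then have al: "\<And>c. W c \<in> {..<4 * NN n} \<times> {..<NN n * NN n}" and fin: "run_limsup (Aut n) W < \<infinity>"
    unfolding sc_lang_def by auto
  have so: "\<And>c. snd (W c) < NN n * NN n"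
  proof -
    fix c show "snd (W c) < NN n * NN n" using al[of c] by (cases "W c") auto
  qed
  have le: "run_limsup (Aut n) W \<le> enat n"
    using cost inO unfolding strategy_cost_def by (metis SUP_upper)
  show False
  proof (cases "\<exists>m. failed n W (Suc (bsq f (Suc m)))")
    case True
    then obtain m where "failed n W (Suc (bsq f (Suc m)))" by blast
    then have "run_limsup (Aut n) W = \<infinity>" by (rule limsup_failed)
    then show False using fin by simp
  next
    case False
    have sp: "\<And>m. \<exists>c. bsq f m \<le> c \<and> c \<le> bsq f m + Lk f (bsq f m) + 1 \<and> spike n W c"
      using block_fail[OF so] False by blast
    have nf: "\<And>c. \<not> failed n W c"
    proof
      fix c assume "failed n W c"
      moreover have "c \<le> Suc (bsq f (Suc c))" using bsq_ge[of "Suc c" f] by simp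
      ultimately have "failed n W (Suc (bsq f (Suc c)))" by (rule failed_mono)
      then show False using False by blast
    qed
    have sps: "\<And>c0. \<exists>c\<ge>c0. spike n W c"
    proof -
      fix c0
      obtain c where "bsq f c0 \<le> c" "spike n W c" using sp[of c0] by blast
      then show "\<exists>c\<ge>c0. spike n W c" using bsq_ge[of c0 f] by (intro exI[of _ c]) auto
    qed
    have "enat n + 1 \<le> run_limsup (Aut n) W" by (rule limsup_spikes[OF nf n1 sps])
    then have "enat n + 1 \<le> enat n" using le by (rule order_trans)
    then show False by (simp add: one_enat_def)
  qed
qed

end



lemma wf_Aut: "wf_streett_cost (Aut n)"
proof -
  have d: "\<And>q a. dlt n q a \<in> {..SK n}"
  proof -
    fix q a
    have "Suc (q mod PP n) mod PP n + PP n * fcode (fstep n (fdec (q div PP n)) a) < SK n"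
      using enc_lt[of "Suc (q mod PP n)" n] by simp
    then show "dlt n q a \<in> {..SK n}" unfolding dlt_def by auto
  qed
  show ?thesis unfolding wf_streett_cost_def using d
    by (auto simp: Qs_def Ps_def)
qed

lemma size_Aut: "sc_size (Aut n) \<le> poly [:42, 28, 4:] n"
  unfolding sc_size_def by (simp add: SK_def NP_def PP_def BB_def algebra_simps)

lemma honest_outcomes:
  assumes n1: "n \<ge> 1" and w: "w \<in> game_outcomes {..<4 * NN n} (fh n) (tauh n)"
  shows "w \<in> sc_lang (Aut n)" "run_limsup (Aut n) w = enat n"
proof -
  obtain x where x: "w = game_outcome (fh n) (tauh n) x" "\<And>k. x k \<in> {..<4 * NN n}"
    using w unfolding game_outcomes_def by blast
  have xr: "\<And>p. x p < 4 * NN n" using x(2) by simp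
  have we: "w = (\<lambda>c. (x c, hout n x c))" using x(1) outcome_h by auto
  show l: "run_limsup (Aut n) w = enat n" unfolding we
    by (rule limsup_const_n[OF honest_nofail[OF xr] n1 honest_nospike[OF xr]])
  show "w \<in> sc_lang (Aut n)" unfolding sc_lang_def using l xr hout_dec(3)[OF xr] we by auto
qed

theorem theorem8:
  shows "\<exists>p :: nat poly. \<forall>n > 0. \<exists>(SI :: nat set) (SO :: nat set) (A :: (nat \<times> nat) streett_cost).
     finite SI \<and> finite SO \<and> SI \<noteq> {} \<and> SO \<noteq> {} \<and>
     wf_streett_cost A \<and> st_alph A = SI \<times> SO \<and> sc_size A \<le> poly p n \<and>
     (\<exists>f tau. delay_fun f \<and> winning_strategy SI f (sc_lang A) tau \<and>
              strategy_cost A SI f tau = enat n) \<and>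
     (\<forall>f. delay_fun f \<longrightarrow>
        (\<forall>tau. winning_strategy SI f (sc_lang A) tau \<and> strategy_cost A SI f tau = enat n \<longrightarrow>
           grants_lookahead f (n * (2 ^ (2 ^ n) - 1))))"
proof (intro exI[of _ "[:42, 28, 4:]"] allI impI)
  fix n :: nat assume "n > 0"
  then have n1: "n \<ge> 1" by simp
  have N0: "NN n > 0" using NN_ge2[OF n1] by simp
  define SI where "SI = {..<4 * NN n}"
  define SO where "SO = {..<NN n * NN n}"
  have i: "\<exists>f tau. delay_fun f \<and> winning_strategy SI f (sc_lang (Aut n)) tau \<and>
              strategy_cost (Aut n) SI f tau = enat n"
  proof (intro exI conjI)
    show "delay_fun (fh n)" unfolding delay_fun_def fh_def by simp
    show "winning_strategy SI (fh n) (sc_lang (Aut n)) (tauh n)"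
      unfolding winning_strategy_def SI_def using honest_outcomes(1)[OF n1] by blast
    have ne: "game_outcomes SI (fh n) (tauh n) \<noteq> {}"
      unfolding game_outcomes_def SI_def using N0 by (auto intro!: exI[of _ "\<lambda>_. 0"])
    show "strategy_cost (Aut n) SI (fh n) (tauh n) = enat n"
      unfolding strategy_cost_def using honest_outcomes(2)[OF n1] ne unfolding SI_def
      by (simp add: SUP_constant)
  qed
  have ii: "\<forall>f. delay_fun f \<longrightarrow>
        (\<forall>tau. winning_strategy SI f (sc_lang (Aut n)) tau \<and> strategy_cost (Aut n) SI f tau = enat n \<longrightarrow>
           grants_lookahead f (n * (2 ^ (2 ^ n) - 1)))"
  proof (intro allI impI)
    fix f tau
    assume df: "delay_fun f" and h: "winning_strategy SI f (sc_lang (Aut n)) tau \<and> strategy_cost (Aut n) SI f tau = enat n"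
    show "grants_lookahead f (n * (2 ^ (2 ^ n) - 1))"
    proof (rule ccontr)
      assume "\<not> ?thesis"
      then have ng: "\<And>i. Lk f i < n * (2 ^ (2 ^ n) - 1)"
        unfolding grants_lookahead_def Lk_def by (simp add: not_le)
      have df': "\<And>i. f i \<noteq> 0" using df unfolding delay_fun_def by blast
      show False using adv_main[OF n1 df' ng] h unfolding SI_def by blast
    qed
  qed
  show "\<exists>(SI :: nat set) (SO :: nat set) (A :: (nat \<times> nat) streett_cost).
     finite SI \<and> finite SO \<and> SI \<noteq> {} \<and> SO \<noteq> {} \<and>
     wf_streett_cost A \<and> st_alph A = SI \<times> SO \<and> sc_size A \<le> poly [:42, 28, 4:] n \<and>
     (\<exists>f tau. delay_fun f \<and> winning_strategy SI f (sc_lang A) tau \<and>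
              strategy_cost A SI f tau = enat n) \<and>
     (\<forall>f. delay_fun f \<longrightarrow>
        (\<forall>tau. winning_strategy SI f (sc_lang A) tau \<and> strategy_cost A SI f tau = enat n \<longrightarrow>
           grants_lookahead f (n * (2 ^ (2 ^ n) - 1))))"
  proof (rule exI[of _ SI], rule exI[of _ SO], rule exI[of _ "Aut n"], intro conjI)
    have "0 \<in> SI" unfolding SI_def using N0 by simp
    then show "SI \<noteq> {}" by blast
    have "0 \<in> SO" unfolding SO_def using N0 by simp
    then show "SO \<noteq> {}" by blast
    show "finite SI" "finite SO" unfolding SI_def SO_def by auto
    show "wf_streett_cost (Aut n)" by (rule wf_Aut)
    show "st_alph (Aut n) = SI \<times> SO" unfolding SI_def SO_def by simp
    show "sc_size (Aut n) \<le> poly [:42, 28, 4:] n" by (rule size_Aut)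
  qed (use i ii in auto)
qed


end
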